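(* Let $n\ge2$, $R>0$, and $B_R\subset\mathbb{R}^n$ a ball of radius $R$. Then $$\lim_{m\to\infty}m\,\lambda_m(B_R)=\frac{P^2(B_R)}{|B_R|}.$$
   Context: For a bounded smooth domain $\Omega$ and $m>0$, $\lambda_m(\Omega)=\inf\{(\int_\Omega|\nabla u|^2dx+\frac1m(\int_{\partial\Omega}|u|\,d\sigma)^2)/\int_\Omega u^2dx:u\in H^1(\Omega),u\ne0\}$. $P(B_R)$ and $|B_R|$ are the perimeter and volume of $B_R$. *)

theory Defs
  imports "HOL-Analysis.Analysis"
begin

definition pd :: "'n::finite \<Rightarrow> (real^'n \<Rightarrow> real) \<Rightarrow> real^'n \<Rightarrow> real" where
  "pd i f x = frechet_derivative f (at x) (axis i 1)"

coinductive smooth_on :: "(real^'n::finite \<Rightarrow> real) \<Rightarrow> (real^'n) set \<Rightarrow> bool" where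
  "open S \<Longrightarrow> f differentiable_on S \<Longrightarrow> (\<forall>i. smooth_on (pd i f) S) \<Longrightarrow> smooth_on f S"

text \<open>Test functions C_c^infinity(Omega) (extended by zero to all of the space).\<close>
definition test_fun :: "(real^'n::finite) set \<Rightarrow> (real^'n \<Rightarrow> real) \<Rightarrow> bool" where
  "test_fun \<Omega> \<phi> \<longleftrightarrow> smooth_on \<phi> UNIV \<and> compact (closure {x. \<phi> x \<noteq> 0})
      \<and> closure {x. \<phi> x \<noteq> 0} \<subseteq> \<Omega>"

definition L2_on :: "(real^'n::finite) set \<Rightarrow> (real^'n \<Rightarrow> real) \<Rightarrow> bool" where
  "L2_on \<Omega> u \<longleftrightarrow> u \<in> borel_measurable (lebesgue_on \<Omega>)
      \<and> integrable (lebesgue_on \<Omega>) (\<lambda>x. (u x)^2)"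

definition H1_grad :: "(real^'n::finite) set \<Rightarrow> (real^'n \<Rightarrow> real) \<Rightarrow> ('n \<Rightarrow> real^'n \<Rightarrow> real) \<Rightarrow> bool" where
  "H1_grad \<Omega> u g \<longleftrightarrow> L2_on \<Omega> u \<and> (\<forall>i. L2_on \<Omega> (g i)) \<and>
     (\<forall>\<phi> i. test_fun \<Omega> \<phi> \<longrightarrow>
        (\<integral>x. u x * pd i \<phi> x \<partial>lebesgue_on \<Omega>) = - (\<integral>x. g i x * \<phi> x \<partial>lebesgue_on \<Omega>))"

text \<open>Surface integral over the sphere of centre c and radius R, with respect to the
  (n-1)-dimensional surface measure, via radial projection of the ball onto its boundary:
  \<open>\<integral>_{\<partial>B_R(c)} f d\<sigma> = (n/R) \<integral>_{B_R(c)} f(c + R (x-c)/|x-c|) dx\<close>.\<close>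
definition sphere_int :: "real^'n::finite \<Rightarrow> real \<Rightarrow> (real^'n \<Rightarrow> real) \<Rightarrow> real" where
  "sphere_int c R f = (real CARD('n) / R) *
     (\<integral>x. f (c + (R / norm (x - c)) *\<^sub>R (x - c)) \<partial>lebesgue_on (ball c R))"

definition perimeter_ball :: "real^'n::finite \<Rightarrow> real \<Rightarrow> real" where
  "perimeter_ball c R = sphere_int c R (\<lambda>_. 1)"

text \<open>For u in H^1(B_R(c)) with weak gradient g, L is the value of \<open>\<integral>_{\<partial>B}|u| d\<sigma>\<close>
  (the L^1 norm of the trace of u): the trace is defined by continuous extension from
  functions smooth up to the boundary, so L is the limit of the boundary integrals of
  |v_k| along any sequence v_k of C^infinity functions converging to u in H^1(B_R(c)).\<close>
definition bdry_abs_int :: "real^'n::finite \<Rightarrow> real \<Rightarrow> (real^'n \<Rightarrow> real) \<Rightarrow> ('n \<Rightarrow> real^'n \<Rightarrow> real) \<Rightarrow> real \<Rightarrow> bool" where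
  "bdry_abs_int c R u g L \<longleftrightarrow> (\<exists>v :: nat \<Rightarrow> real^'n \<Rightarrow> real.
      (\<forall>k. smooth_on (v k) UNIV) \<and>
      ((\<lambda>k. \<integral>x. (v k x - u x)^2 \<partial>lebesgue_on (ball c R)) \<longlonglongrightarrow> 0) \<and>
      ((\<lambda>k. \<integral>x. (\<Sum>i\<in>UNIV. (pd i (v k) x - g i x)^2) \<partial>lebesgue_on (ball c R)) \<longlonglongrightarrow> 0) \<and>
      ((\<lambda>k. sphere_int c R (\<lambda>x. \<bar>v k x\<bar>)) \<longlonglongrightarrow> L))"

definition lambda_ball :: "real^'n::finite \<Rightarrow> real \<Rightarrow> real \<Rightarrow> real" where
  "lambda_ball c R m = Inf {((\<integral>x. (\<Sum>i\<in>UNIV. (g i x)^2) \<partial>lebesgue_on (ball c R)) + L^2 / m)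
        / (\<integral>x. (u x)^2 \<partial>lebesgue_on (ball c R)) | u g L.
      H1_grad (ball c R) u g \<and> bdry_abs_int c R u g L \<and>
      (\<integral>x. (u x)^2 \<partial>lebesgue_on (ball c R)) \<noteq> 0}"

end

theory Submission
  imports Defs
begin


lemma seg_bound1:
  fixes v :: "'a::euclidean_space \<Rightarrow> real" and gr :: "'a \<Rightarrow> 'a"
  assumes dv: "\<And>x. (v has_derivative (\<lambda>h. gr x \<bullet> h)) (at x)"
    and cg: "continuous_on UNIV gr" and ab: "a \<le> b"
  shows "ennreal \<bar>v (x0 + b *\<^sub>R d) - v (x0 + a *\<^sub>R d)\<bar>
     \<le> (\<integral>\<^sup>+t. ennreal (norm (gr (x0 + t *\<^sub>R d)) * norm d) * indicator {a..b} t \<partial>lborel)"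
proof -
  define f' where "f' t = gr (x0 + t *\<^sub>R d) \<bullet> d" for t
  define g where "g t = norm (gr (x0 + t *\<^sub>R d)) * norm d" for t
  have D: "((\<lambda>t. v (x0 + t *\<^sub>R d)) has_vector_derivative f' t) (at t within {a..b})" for t
  proof -
    have 1: "((\<lambda>t. x0 + t *\<^sub>R d) has_derivative (\<lambda>h. h *\<^sub>R d)) (at t)"
      by (auto intro!: derivative_eq_intros)
    have "((v \<circ> (\<lambda>t. x0 + t *\<^sub>R d)) has_derivative ((\<lambda>h. gr (x0 + t *\<^sub>R d) \<bullet> h) \<circ> (\<lambda>h. h *\<^sub>R d))) (at t)"
      by (rule diff_chain_at[OF 1 dv])
    then show ?thesis
      unfolding has_vector_derivative_def f'_def
      by (auto simp: o_def inner_scaleR_right intro: has_derivative_at_withinI)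
  qed
  have I: "(f' has_integral (v (x0 + b *\<^sub>R d) - v (x0 + a *\<^sub>R d))) {a..b}"
    using fundamental_theorem_of_calculus[OF ab D] by simp
  have cgc: "continuous_on S (\<lambda>t. gr (x0 + t *\<^sub>R d))" for S
    by (intro continuous_on_compose2[OF cg] continuous_intros) auto
  have f'c: "continuous_on {a..b} f'" unfolding f'_def
    by (intro continuous_intros cgc)
  have gc: "continuous_on UNIV g" unfolding g_def
    by (intro continuous_intros cgc)
  have gi: "g integrable_on {a..b}"
    by (rule integrable_continuous_interval) (rule continuous_on_subset[OF gc], auto)
  have le: "norm (integral {a..b} f') \<le> integral {a..b} g"
    by (rule integral_norm_bound_integral[OF integrable_continuous_interval[OF f'c] gi])
       (auto simp: f'_def g_def Cauchy_Schwarz_ineq2)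
  have eq: "(\<integral>\<^sup>+t. ennreal (g t) * indicator {a..b} t \<partial>lborel) = ennreal (integral {a..b} g)"
    by (rule nn_integral_has_integral_lebesgue'[OF _ integrable_integral[OF gi]]) (simp add: g_def)
  have "\<bar>v (x0 + b *\<^sub>R d) - v (x0 + a *\<^sub>R d)\<bar> \<le> integral {a..b} g"
    using le I by (simp add: integral_unique)
  then show ?thesis using eq unfolding g_def by simp
qed

lemma seg_bound2:
  fixes v :: "'a::euclidean_space \<Rightarrow> real" and gr :: "'a \<Rightarrow> 'a"
  assumes dv: "\<And>x. (v has_derivative (\<lambda>h. gr x \<bullet> h)) (at x)"
    and cg: "continuous_on UNIV gr" and ab: "a \<le> b"
  shows "ennreal ((v (x0 + b *\<^sub>R d) - v (x0 + a *\<^sub>R d))^2)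
     \<le> ennreal (b - a) * (\<integral>\<^sup>+t. ennreal ((norm (gr (x0 + t *\<^sub>R d)) * norm d)^2) * indicator {a..b} t \<partial>lborel)"
proof -
  have [measurable]: "gr \<in> borel_measurable borel"
    using cg by (intro borel_measurable_continuous_onI)
  define G where "G t = ennreal (norm (gr (x0 + t *\<^sub>R d)) * norm d) * indicator {a..b} t" for t
  have [measurable]: "G \<in> borel_measurable lborel" unfolding G_def by measurable
  have "ennreal ((v (x0 + b *\<^sub>R d) - v (x0 + a *\<^sub>R d))^2) = (ennreal \<bar>v (x0 + b *\<^sub>R d) - v (x0 + a *\<^sub>R d)\<bar>)^2"
    by (simp add: ennreal_power)
  also have "\<dots> \<le> (\<integral>\<^sup>+t. G t \<partial>lborel)^2"
    unfolding G_def by (intro power_mono seg_bound1[OF dv cg ab]) auto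
  also have "(\<integral>\<^sup>+t. G t \<partial>lborel) = (\<integral>\<^sup>+t. G t * indicator {a..b} t \<partial>lborel)"
    by (intro nn_integral_cong) (auto simp: G_def indicator_def)
  also have "(\<dots>)^2 \<le> (\<integral>\<^sup>+t. G t ^ 2 \<partial>lborel) * (\<integral>\<^sup>+t. (indicator {a..b} t :: ennreal) ^ 2 \<partial>lborel)"
    by (rule Cauchy_Schwarz_nn_integral) auto
  also have "(\<integral>\<^sup>+t. (indicator {a..b} t :: ennreal) ^ 2 \<partial>lborel) = ennreal (b - a)"
  proof -
    have "(\<integral>\<^sup>+t. (indicator {a..b} t :: ennreal) ^ 2 \<partial>lborel) = (\<integral>\<^sup>+t. indicator {a..b} t \<partial>lborel)"
      by (intro nn_integral_cong) (auto simp: indicator_def)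
    then show ?thesis using ab by simp
  qed
  also have "(\<integral>\<^sup>+t. G t ^ 2 \<partial>lborel) = (\<integral>\<^sup>+t. ennreal ((norm (gr (x0 + t *\<^sub>R d)) * norm d)^2) * indicator {a..b} t \<partial>lborel)"
    by (intro nn_integral_cong) (auto simp: G_def indicator_def ennreal_power[symmetric])
  finally show ?thesis by (simp add: mult.commute)
qed


lemma nn_affine:
  fixes f :: "'a::euclidean_space \<Rightarrow> ennreal"
  assumes [measurable]: "f \<in> borel_measurable borel" and t: "t \<noteq> 0"
  shows "(\<integral>\<^sup>+x. f (c + t *\<^sub>R x) \<partial>lborel) = ennreal (1 / \<bar>t\<bar>^DIM('a)) * (\<integral>\<^sup>+x. f x \<partial>lborel)"
proof -
  have "(\<integral>\<^sup>+x. f x \<partial>lborel) = (\<integral>\<^sup>+x. f x \<partial>density (distr lborel borel (\<lambda>x. c + t *\<^sub>R x)) (\<lambda>_. \<bar>t\<bar>^DIM('a)))"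
    using lborel_affine[OF t, of c] by simp
  also have "\<dots> = (\<integral>\<^sup>+x. ennreal (\<bar>t\<bar>^DIM('a)) * f (c + t *\<^sub>R x) \<partial>lborel)"
    by (simp add: nn_integral_density nn_integral_distr)
  also have "\<dots> = ennreal (\<bar>t\<bar>^DIM('a)) * (\<integral>\<^sup>+x. f (c + t *\<^sub>R x) \<partial>lborel)"
    by (simp add: nn_integral_cmult)
  finally have "ennreal (1 / \<bar>t\<bar>^DIM('a)) * (\<integral>\<^sup>+x. f x \<partial>lborel)
      = ennreal (1 / \<bar>t\<bar>^DIM('a)) * ennreal (\<bar>t\<bar>^DIM('a)) * (\<integral>\<^sup>+x. f (c + t *\<^sub>R x) \<partial>lborel)"
    by (simp add: mult.assoc)
  also have "ennreal (1 / \<bar>t\<bar>^DIM('a)) * ennreal (\<bar>t\<bar>^DIM('a)) = 1"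
    using t by (simp add: ennreal_mult[symmetric])
  finally show ?thesis by simp
qed

lemma ball_sets_borel[measurable]: "ball (c::'a::euclidean_space) R \<in> sets borel"
  by (simp add: borel_open)

lemma cball_sets_borel[measurable]: "cball (c::'a::euclidean_space) R \<in> sets borel"
  by (simp add: borel_closed)

lemma convex_comb_ball:
  fixes x y c :: "'a::euclidean_space"
  assumes "x \<in> ball c R" "y \<in> ball c R" "0 \<le> s" "s \<le> 1"
  shows "(1 - s) *\<^sub>R x + s *\<^sub>R y \<in> ball c R"
  using convexD[OF convex_ball[of c R] assms(1,2), of "1 - s" s] assms by auto

lemma inv_pow_le:
  fixes t :: real
  assumes "1/2 \<le> t" "t \<le> 1"
  shows "1 / \<bar>t\<bar>^n \<le> 2^n"
proof -
  have "(1/2)^n \<le> t^n" using assms by (intro power_mono) auto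
  then have "1 / t^n \<le> 1 / (1/2)^n" using assms
    by (intro divide_left_mono) auto
  then show ?thesis using assms by (simp add: power_one_over)
qed

lemma poincare_slice:
  fixes H :: "'a::euclidean_space \<Rightarrow> ennreal"
  assumes [measurable]: "H \<in> borel_measurable borel" and s: "0 \<le> s" "s \<le> 1"
  shows "(\<integral>\<^sup>+x. \<integral>\<^sup>+y. H ((1 - s) *\<^sub>R x + s *\<^sub>R y) * indicator (ball c R) x * indicator (ball c R) y \<partial>lborel \<partial>lborel)
    \<le> ennreal (2^DIM('a)) * emeasure lborel (ball c R) * (\<integral>\<^sup>+z. H z * indicator (ball c R) z \<partial>lborel)"
    (is "?L \<le> ?R")
proof -
  let ?B = "ball c R"
  let ?K = "(\<integral>\<^sup>+z. H z * indicator ?B z \<partial>lborel)"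
  have HB[measurable]: "(\<lambda>z. H z * indicator ?B z) \<in> borel_measurable borel" by measurable
  show ?thesis
  proof (cases "s \<le> 1/2")
    case True
    have "?L = (\<integral>\<^sup>+y. \<integral>\<^sup>+x. H ((1 - s) *\<^sub>R x + s *\<^sub>R y) * indicator ?B x * indicator ?B y \<partial>lborel \<partial>lborel)"
      by (rule lborel_pair.Fubini'[symmetric]) measurable
    also have "\<dots> \<le> (\<integral>\<^sup>+y. indicator ?B y * (\<integral>\<^sup>+x. H (s *\<^sub>R y + (1 - s) *\<^sub>R x) * indicator ?B (s *\<^sub>R y + (1 - s) *\<^sub>R x) \<partial>lborel) \<partial>lborel)"
    proof (intro nn_integral_mono)
      fix y
      show "(\<integral>\<^sup>+x. H ((1 - s) *\<^sub>R x + s *\<^sub>R y) * indicator ?B x * indicator ?B y \<partial>lborel)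
         \<le> indicator ?B y * (\<integral>\<^sup>+x. H (s *\<^sub>R y + (1 - s) *\<^sub>R x) * indicator ?B (s *\<^sub>R y + (1 - s) *\<^sub>R x) \<partial>lborel)"
      proof (cases "y \<in> ?B")
        case True
        then show ?thesis
          using convex_comb_ball[of _ c R y s] s
          by (auto intro!: nn_integral_mono simp: indicator_def add.commute)
      qed simp
    qed
    also have "\<dots> = (\<integral>\<^sup>+y. indicator ?B y * (ennreal (1 / \<bar>1 - s\<bar>^DIM('a)) * ?K) \<partial>lborel)"
      using True by (subst nn_affine) auto
    also have "\<dots> \<le> (\<integral>\<^sup>+y. indicator ?B y * (ennreal (2^DIM('a)) * ?K) \<partial>lborel)"
      using True s by (intro nn_integral_mono mult_left_mono mult_right_mono ennreal_leI inv_pow_le) auto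
    also have "\<dots> = ?R"
      by (simp add: nn_integral_multc mult.commute mult.left_commute)
    finally show ?thesis .
  next
    case False
    have "?L \<le> (\<integral>\<^sup>+x. indicator ?B x * (\<integral>\<^sup>+y. H ((1 - s) *\<^sub>R x + s *\<^sub>R y) * indicator ?B ((1 - s) *\<^sub>R x + s *\<^sub>R y) \<partial>lborel) \<partial>lborel)"
    proof (intro nn_integral_mono)
      fix x
      show "(\<integral>\<^sup>+y. H ((1 - s) *\<^sub>R x + s *\<^sub>R y) * indicator ?B x * indicator ?B y \<partial>lborel)
         \<le> indicator ?B x * (\<integral>\<^sup>+y. H ((1 - s) *\<^sub>R x + s *\<^sub>R y) * indicator ?B ((1 - s) *\<^sub>R x + s *\<^sub>R y) \<partial>lborel)"
      proof (cases "x \<in> ?B")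
        case True
        then show ?thesis
          using convex_comb_ball[of x c R _ s] s
          by (auto intro!: nn_integral_mono simp: indicator_def)
      qed simp
    qed
    also have "\<dots> = (\<integral>\<^sup>+x. indicator ?B x * (ennreal (1 / \<bar>s\<bar>^DIM('a)) * ?K) \<partial>lborel)"
      using False by (subst nn_affine) auto
    also have "\<dots> \<le> (\<integral>\<^sup>+x. indicator ?B x * (ennreal (2^DIM('a)) * ?K) \<partial>lborel)"
      using False s by (intro nn_integral_mono mult_left_mono mult_right_mono ennreal_leI inv_pow_le) auto
    also have "\<dots> = ?R"
      by (simp add: nn_integral_multc mult.commute mult.left_commute)
    finally show ?thesis .
  qed
qed

lemma poincare_nn:
  fixes v :: "'a::euclidean_space \<Rightarrow> real" and gr :: "'a \<Rightarrow> 'a"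
  assumes dv: "\<And>x. (v has_derivative (\<lambda>h. gr x \<bullet> h)) (at x)"
    and cg: "continuous_on UNIV gr"
  shows "(\<integral>\<^sup>+x. (\<integral>\<^sup>+y. ennreal ((v y - v x)^2) * indicator (ball c R) y \<partial>lborel) * indicator (ball c R) x \<partial>lborel)
    \<le> ennreal (4 * R^2) * (ennreal (2^DIM('a)) * emeasure lborel (ball c R) * (\<integral>\<^sup>+z. ennreal (norm (gr z)^2) * indicator (ball c R) z \<partial>lborel))"
    (is "?L \<le> ?R")
proof -
  let ?B = "ball c R"
  have [measurable]: "gr \<in> borel_measurable borel"
    using cg by (intro borel_measurable_continuous_onI)
  define H where "H z = ennreal (norm (gr z)^2)" for z
  have [measurable]: "H \<in> borel_measurable borel" unfolding H_def by measurable
  define C0 where "C0 = ennreal (4 * R^2)"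
  define G where "G x y s = H ((1 - s) *\<^sub>R x + s *\<^sub>R y) * indicator ?B x * indicator ?B y" for x y :: 'a and s :: real
  have step1: "ennreal ((v y - v x)^2) \<le> C0 * (\<integral>\<^sup>+s. H ((1 - s) *\<^sub>R x + s *\<^sub>R y) * indicator {0..1} s \<partial>lborel)"
    if "x \<in> ?B" "y \<in> ?B" for x y
  proof -
    have nxy: "norm (y - x) \<le> 2 * R"
    proof -
      have "norm (y - x) \<le> norm (y - c) + norm (c - x)" using norm_triangle_ineq[of "y - c" "c - x"] by simp
      also have "\<dots> \<le> 2 * R" using that by (simp add: dist_norm norm_minus_commute)
      finally show ?thesis .
    qed
    have "ennreal ((v y - v x)^2) \<le> ennreal (1 - 0) * (\<integral>\<^sup>+t. ennreal ((norm (gr (x + t *\<^sub>R (y - x))) * norm (y - x))^2) * indicator {0..1} t \<partial>lborel)"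
      using seg_bound2[OF dv cg, of 0 1 x "y - x"] by simp
    also have "\<dots> \<le> (\<integral>\<^sup>+t. C0 * (H ((1 - t) *\<^sub>R x + t *\<^sub>R y) * indicator {0..1} t) \<partial>lborel)"
    proof (simp, intro nn_integral_mono)
      fix t
      have e: "x + t *\<^sub>R (y - x) = (1 - t) *\<^sub>R x + t *\<^sub>R y" by (simp add: algebra_simps)
      have "(norm (gr (x + t *\<^sub>R (y - x))) * norm (y - x))^2 = norm (gr (x + t *\<^sub>R (y - x)))^2 * norm (y - x)^2"
        by (simp add: power_mult_distrib)
      also have "\<dots> \<le> norm (gr (x + t *\<^sub>R (y - x)))^2 * (2 * R)^2"
        using nxy by (intro mult_left_mono power_mono) auto
      finally have "(norm (gr (x + t *\<^sub>R (y - x))) * norm (y - x))^2 \<le> 4 * R^2 * norm (gr ((1 - t) *\<^sub>R x + t *\<^sub>R y))^2"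
        by (simp add: e power_mult_distrib mult.commute)
      then show "ennreal ((norm (gr (x + t *\<^sub>R (y - x))) * norm (y - x))^2) * indicator {0..1} t
          \<le> C0 * (H ((1 - t) *\<^sub>R x + t *\<^sub>R y) * indicator {0..1} t)"
        unfolding C0_def H_def
        by (auto simp: indicator_def ennreal_mult[symmetric] intro!: ennreal_leI)
    qed
    also have "\<dots> = C0 * (\<integral>\<^sup>+s. H ((1 - s) *\<^sub>R x + s *\<^sub>R y) * indicator {0..1} s \<partial>lborel)"
      by (rule nn_integral_cmult) measurable
    finally show ?thesis .
  qed
  have "?L \<le> (\<integral>\<^sup>+x. \<integral>\<^sup>+y. \<integral>\<^sup>+s. C0 * indicator {0..1} s * G x y s \<partial>lborel \<partial>lborel \<partial>lborel)"
  proof (intro nn_integral_mono)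
    fix x
    show "(\<integral>\<^sup>+y. ennreal ((v y - v x)^2) * indicator ?B y \<partial>lborel) * indicator ?B x
      \<le> (\<integral>\<^sup>+y. \<integral>\<^sup>+s. C0 * indicator {0..1} s * G x y s \<partial>lborel \<partial>lborel)"
    proof (cases "x \<in> ?B")
      case True
      have "(\<integral>\<^sup>+y. ennreal ((v y - v x)^2) * indicator ?B y \<partial>lborel)
         \<le> (\<integral>\<^sup>+y. \<integral>\<^sup>+s. C0 * indicator {0..1} s * G x y s \<partial>lborel \<partial>lborel)"
      proof (intro nn_integral_mono)
        fix y
        show "ennreal ((v y - v x)^2) * indicator ?B y \<le> (\<integral>\<^sup>+s. C0 * indicator {0..1} s * G x y s \<partial>lborel)"
        proof (cases "y \<in> ?B")
          case True
          have "(\<integral>\<^sup>+s. C0 * indicator {0..1} s * G x y s \<partial>lborel) = C0 * (\<integral>\<^sup>+s. H ((1 - s) *\<^sub>R x + s *\<^sub>R y) * indicator {0..1} s \<partial>lborel)"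
            using True \<open>x \<in> ?B\<close> unfolding G_def
            by (subst nn_integral_cmult[symmetric]) (measurable, auto intro!: nn_integral_cong simp: mult_ac)
          then show ?thesis using step1[OF \<open>x \<in> ?B\<close> True] True by simp
        qed simp
      qed
      then show ?thesis using True by simp
    qed simp
  qed
  also have "\<dots> = (\<integral>\<^sup>+x. \<integral>\<^sup>+s. \<integral>\<^sup>+y. C0 * indicator {0..1} s * G x y s \<partial>lborel \<partial>lborel \<partial>lborel)"
    by (intro nn_integral_cong lborel_pair.Fubini'[symmetric]) (unfold G_def, measurable)
  also have "\<dots> = (\<integral>\<^sup>+s. \<integral>\<^sup>+x. \<integral>\<^sup>+y. C0 * indicator {0..1} s * G x y s \<partial>lborel \<partial>lborel \<partial>lborel)"
    by (rule lborel_pair.Fubini'[symmetric]) (unfold G_def, measurable)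
  also have "\<dots> \<le> (\<integral>\<^sup>+(s::real). C0 * indicator {0..1} s * (ennreal (2^DIM('a)) * emeasure lborel ?B * (\<integral>\<^sup>+z. H z * indicator ?B z \<partial>lborel)) \<partial>lborel)"
  proof (rule nn_integral_mono)
    fix s :: real
    show "(\<integral>\<^sup>+x. \<integral>\<^sup>+y. C0 * indicator {0..1} s * G x y s \<partial>lborel \<partial>lborel)
       \<le> C0 * indicator {0..1} s * (ennreal (2^DIM('a)) * emeasure lborel ?B * (\<integral>\<^sup>+z. H z * indicator ?B z \<partial>lborel))"
    proof (cases "s \<in> {0..1}")
      case True
      have "(\<integral>\<^sup>+x. \<integral>\<^sup>+y. C0 * indicator {0..1} s * G x y s \<partial>lborel \<partial>lborel)
          = C0 * (\<integral>\<^sup>+x. \<integral>\<^sup>+y. G x y s \<partial>lborel \<partial>lborel)"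
      proof -
        have "(\<integral>\<^sup>+x. \<integral>\<^sup>+y. C0 * indicator {0..1} s * G x y s \<partial>lborel \<partial>lborel)
           = (\<integral>\<^sup>+x. C0 * (\<integral>\<^sup>+y. G x y s \<partial>lborel) \<partial>lborel)"
          using True by (intro nn_integral_cong) (simp, rule nn_integral_cmult, unfold G_def, measurable)
        also have "\<dots> = C0 * (\<integral>\<^sup>+x. \<integral>\<^sup>+y. G x y s \<partial>lborel \<partial>lborel)"
          by (rule nn_integral_cmult) (unfold G_def, measurable)
        finally show ?thesis .
      qed
      also have "\<dots> \<le> C0 * (ennreal (2^DIM('a)) * emeasure lborel ?B * (\<integral>\<^sup>+z. H z * indicator ?B z \<partial>lborel))"
        using True unfolding G_def by (intro mult_left_mono poincare_slice) auto
      finally show ?thesis using True by simp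
    qed simp
  qed
  also have "\<dots> = C0 * (ennreal (2^DIM('a)) * emeasure lborel ?B * (\<integral>\<^sup>+z. H z * indicator ?B z \<partial>lborel))"
    by (simp add: nn_integral_cmult nn_integral_multc mult_ac)
  finally show ?thesis unfolding C0_def H_def .
qed


lemma sphere_null: "sphere (c::'a::euclidean_space) r \<in> null_sets lborel"
  using negligible_sphere[of c r]
  by (auto simp: null_sets_completion_iff negligible_iff_null_sets negligible_convex_frontier)

lemma nn_cball_ball:
  fixes f :: "'a::euclidean_space \<Rightarrow> ennreal"
  shows "(\<integral>\<^sup>+z. f z * indicator (cball c R) z \<partial>lborel) = (\<integral>\<^sup>+z. f z * indicator (ball c R) z \<partial>lborel)"
proof (rule nn_integral_cong_AE)
  have "AE z in lborel. z \<notin> sphere c R"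
    using sphere_null[of c R] by (rule AE_not_in)
  then show "AE z in lborel. f z * indicator (cball c R) z = f z * indicator (ball c R) z"
    by eventually_elim (auto simp: indicator_def)
qed

lemma int_inv_sq: "(\<integral>\<^sup>+t. ennreal (1 / t^2) * indicator {1..} t \<partial>lborel) = 1"
proof -
  have h: "((\<lambda>x::real. x powr -2) has_integral 1) {1..}"
    using has_integral_powr_to_inf[of "-2" 1] by simp
  have h2: "((\<lambda>x::real. 1 / x^2) has_integral 1) {1..}"
    by (rule has_integral_eq[OF _ h]) (auto simp: powr_minus powr_realpow divide_inverse)
  have "(\<integral>\<^sup>+t. ennreal (1 / t^2) * indicator {1..} t \<partial>lborel) = ennreal 1"
    by (rule nn_integral_has_integral_lebesgue'[OF _ h2]) auto
  then show ?thesis by simp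
qed

lemma exists_good_point:
  fixes g :: "'a::euclidean_space \<Rightarrow> ennreal"
  assumes [measurable]: "g \<in> borel_measurable borel" "B \<in> sets borel"
    and pos: "emeasure lborel B \<noteq> 0" and fin: "emeasure lborel B \<noteq> \<infinity>" and K: "K \<noteq> \<infinity>"
    and le: "(\<integral>\<^sup>+x. g x * indicator B x \<partial>lborel) \<le> K * emeasure lborel B"
  shows "\<exists>x\<in>B. g x \<le> K"
proof (rule ccontr)
  assume "\<not> (\<exists>x\<in>B. g x \<le> K)"
  then have gt: "\<And>x. x \<in> B \<Longrightarrow> K < g x" by (auto simp: not_le)
  have eqK: "(\<integral>\<^sup>+x. K * indicator B x \<partial>lborel) = K * emeasure lborel B"
    by (simp add: nn_integral_cmult_indicator)
  have "(\<integral>\<^sup>+x. K * indicator B x \<partial>lborel) < (\<integral>\<^sup>+x. g x * indicator B x \<partial>lborel)"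
  proof (rule nn_integral_less)
    show "(\<integral>\<^sup>+x. K * indicator B x \<partial>lborel) \<noteq> \<infinity>"
      using K fin by (simp add: nn_integral_cmult_indicator ennreal_mult_eq_top_iff)
    show "AE x in lborel. K * indicator B x \<le> g x * indicator B x"
      using gt by (auto simp: indicator_def less_imp_le)
    show "\<not> (AE x in lborel. g x * indicator B x \<le> K * indicator B x)"
    proof
      assume "AE x in lborel. g x * indicator B x \<le> K * indicator B x"
      then have "AE x in lborel. x \<notin> B"
        by eventually_elim (use gt in \<open>fastforce simp: indicator_def not_le split: if_splits\<close>)
      then have "emeasure lborel B = 0"
        by (subst AE_iff_measurable[symmetric, where P="\<lambda>x. x \<notin> B"]) auto
      then show False using pos by simp
    qed
  qed measurable
  then show False using le eqK by simp
qed

lemma inv_pow_le2: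
  fixes t :: real
  assumes "1 \<le> t" "1 \<le> n"
  shows "1 / t * (1 / \<bar>t\<bar>^n) \<le> 1 / t^2"
proof -
  have "t^1 \<le> t^n" using assms by (intro power_increasing) auto
  then have "t * t \<le> t * t^n" using assms by (intro mult_left_mono) auto
  then show ?thesis using assms
    by (simp add: power2_eq_square divide_simps)
qed

lemma trace_nn:
  fixes w :: "'a::euclidean_space \<Rightarrow> real" and gr :: "'a \<Rightarrow> 'a"
  assumes dv: "\<And>x. (w has_derivative (\<lambda>h. gr x \<bullet> h)) (at x)"
    and cg: "continuous_on UNIV gr" and R: "0 < R"
  shows "(\<integral>\<^sup>+y. ennreal \<bar>w (c + (R / norm (y - c)) *\<^sub>R (y - c))\<bar> * indicator (ball c R) y \<partial>lborel)
     \<le> (\<integral>\<^sup>+y. ennreal \<bar>w y\<bar> * indicator (ball c R) y \<partial>lborel)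
        + ennreal R * (\<integral>\<^sup>+z. ennreal (norm (gr z)) * indicator (ball c R) z \<partial>lborel)"
proof -
  let ?B = "ball c R"
  have [measurable]: "gr \<in> borel_measurable borel"
    using cg by (intro borel_measurable_continuous_onI)
  have "continuous_on UNIV w"
    using dv by (metis continuous_at_imp_continuous_on has_derivative_continuous)
  then have [measurable]: "w \<in> borel_measurable borel"
    by (intro borel_measurable_continuous_onI)
  define F where "F y t = ennreal (norm (gr (c + t *\<^sub>R (y - c))) * norm (y - c) * indicator {1..} t * indicator {..R} (t * norm (y - c)))" for y t
  have [measurable]: "(\<lambda>(y, t). F y t) \<in> borel_measurable (lborel \<Otimes>\<^sub>M lborel)"
    unfolding F_def by measurable
  define q where "q z = ennreal (norm (gr z) * norm (z - c) * indicator (cball c R) z)" for z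
  have [measurable]: "q \<in> borel_measurable borel" unfolding q_def by measurable
  define Q where "Q = (\<integral>\<^sup>+z. q z \<partial>lborel)"
  have pw: "ennreal \<bar>w (c + (R / norm (y - c)) *\<^sub>R (y - c))\<bar> \<le> ennreal \<bar>w y\<bar> + (\<integral>\<^sup>+t. F y t \<partial>lborel)"
    if y: "y \<in> ?B" for y
  proof (cases "y = c")
    case True
    then show ?thesis by (simp add: add_increasing2)
  next
    case False
    define r where "r = norm (y - c)"
    have r: "0 < r" "r < R" using False y by (auto simp: r_def dist_norm norm_minus_commute)
    define T where "T = R / r"
    have T: "1 \<le> T" using r by (simp add: T_def)
    have "ennreal \<bar>w (c + T *\<^sub>R (y - c)) - w (c + 1 *\<^sub>R (y - c))\<bar>
       \<le> (\<integral>\<^sup>+t. ennreal (norm (gr (c + t *\<^sub>R (y - c))) * norm (y - c)) * indicator {1..T} t \<partial>lborel)"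
      by (rule seg_bound1[OF dv cg T])
    also have "\<dots> = (\<integral>\<^sup>+t. F y t \<partial>lborel)"
    proof (intro nn_integral_cong)
      fix t
      have "t \<le> T \<longleftrightarrow> t * r \<le> R" using r by (simp add: T_def le_divide_eq)
      then show "ennreal (norm (gr (c + t *\<^sub>R (y - c))) * norm (y - c)) * indicator {1..T} t = F y t"
        unfolding F_def r_def[symmetric] by (auto simp: indicator_def)
    qed
    finally have 1: "ennreal \<bar>w (c + T *\<^sub>R (y - c)) - w y\<bar> \<le> (\<integral>\<^sup>+t. F y t \<partial>lborel)" by simp
    have "\<bar>w (c + T *\<^sub>R (y - c))\<bar> \<le> \<bar>w y\<bar> + \<bar>w (c + T *\<^sub>R (y - c)) - w y\<bar>" by linarith
    then have "ennreal \<bar>w (c + T *\<^sub>R (y - c))\<bar> \<le> ennreal \<bar>w y\<bar> + ennreal \<bar>w (c + T *\<^sub>R (y - c)) - w y\<bar>"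
      by (simp add: ennreal_plus[symmetric] del: ennreal_plus)
    also have "\<dots> \<le> ennreal \<bar>w y\<bar> + (\<integral>\<^sup>+t. F y t \<partial>lborel)"
      using 1 by (rule add_left_mono)
    finally show ?thesis by (simp add: T_def r_def)
  qed
  have "(\<integral>\<^sup>+y. ennreal \<bar>w (c + (R / norm (y - c)) *\<^sub>R (y - c))\<bar> * indicator ?B y \<partial>lborel)
     \<le> (\<integral>\<^sup>+y. ennreal \<bar>w y\<bar> * indicator ?B y + (\<integral>\<^sup>+t. F y t \<partial>lborel) \<partial>lborel)"
  proof (intro nn_integral_mono)
    fix y show "ennreal \<bar>w (c + (R / norm (y - c)) *\<^sub>R (y - c))\<bar> * indicator ?B y
        \<le> ennreal \<bar>w y\<bar> * indicator ?B y + (\<integral>\<^sup>+t. F y t \<partial>lborel)"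
      using pw[of y] by (cases "y \<in> ?B") auto
  qed
  also have "\<dots> = (\<integral>\<^sup>+y. ennreal \<bar>w y\<bar> * indicator ?B y \<partial>lborel) + (\<integral>\<^sup>+y. \<integral>\<^sup>+t. F y t \<partial>lborel \<partial>lborel)"
    by (rule nn_integral_add) measurable
  also have "(\<integral>\<^sup>+y. \<integral>\<^sup>+t. F y t \<partial>lborel \<partial>lborel) = (\<integral>\<^sup>+t. \<integral>\<^sup>+y. F y t \<partial>lborel \<partial>lborel)"
    by (rule lborel_pair.Fubini'[of "\<lambda>t y. F y t"]) measurable
  also have "\<dots> \<le> (\<integral>\<^sup>+t. ennreal (1 / t^2) * indicator {1..} t * Q \<partial>lborel)"
  proof (intro nn_integral_mono)
    fix t :: real
    show "(\<integral>\<^sup>+y. F y t \<partial>lborel) \<le> ennreal (1 / t^2) * indicator {1..} t * Q"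
    proof (cases "1 \<le> t")
      case False
      then show ?thesis by (simp add: F_def)
    next
      case True
      have eqF: "F y t = ennreal (1 / t) * q (c + t *\<^sub>R (y - c))" for y
      proof -
        have n: "norm (c + t *\<^sub>R (y - c) - c) = t * norm (y - c)" using True by simp
        have i: "indicator (cball c R) (c + t *\<^sub>R (y - c)) = (indicator {..R} (t * norm (y - c)) :: real)"
          using True by (simp add: indicator_def dist_norm)
        have "norm (gr (c + t *\<^sub>R (y - c))) * norm (y - c) * indicator {1..} t * indicator {..R} (t * norm (y - c))
            = 1 / t * (norm (gr (c + t *\<^sub>R (y - c))) * norm (c + t *\<^sub>R (y - c) - c) * indicator (cball c R) (c + t *\<^sub>R (y - c)))"
          using True unfolding n i by (simp add: field_simps)
        then show ?thesis unfolding F_def q_def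
          using True by (simp add: ennreal_mult[symmetric])
      qed
      have "(\<integral>\<^sup>+y. F y t \<partial>lborel) = (\<integral>\<^sup>+y. ennreal (1 / t) * q ((c - t *\<^sub>R c) + t *\<^sub>R y) \<partial>lborel)"
        by (intro nn_integral_cong) (simp add: eqF algebra_simps)
      also have "\<dots> = ennreal (1 / t) * (\<integral>\<^sup>+y. q ((c - t *\<^sub>R c) + t *\<^sub>R y) \<partial>lborel)"
        by (rule nn_integral_cmult) measurable
      also have "\<dots> = ennreal (1 / t) * (ennreal (1 / \<bar>t\<bar>^DIM('a)) * Q)"
        using True unfolding Q_def by (subst nn_affine) auto
      also have "\<dots> = ennreal (1 / t * (1 / \<bar>t\<bar>^DIM('a))) * Q"
      proof -
        have "ennreal (1 / t * (1 / \<bar>t\<bar>^DIM('a))) = ennreal (1 / t) * ennreal (1 / \<bar>t\<bar>^DIM('a))"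
          using True by (intro ennreal_mult) auto
        then show ?thesis by (simp add: mult.assoc)
      qed
      also have "\<dots> \<le> ennreal (1 / t^2) * Q"
        using True DIM_positive[where 'a='a]
        by (intro mult_right_mono ennreal_leI inv_pow_le2) auto
      finally show ?thesis using True by simp
    qed
  qed
  also have "\<dots> = Q * (\<integral>\<^sup>+t. ennreal (1 / t^2) * indicator {1..} t \<partial>lborel)"
  proof -
    have "(\<integral>\<^sup>+t. ennreal (1 / t^2) * indicator {1..} t * Q \<partial>lborel) = (\<integral>\<^sup>+t. Q * (ennreal (1 / t^2) * indicator {1..} t) \<partial>lborel)"
      by (simp add: mult_ac)
    also have "\<dots> = Q * (\<integral>\<^sup>+t. ennreal (1 / t^2) * indicator {1..} t \<partial>lborel)"
      by (rule nn_integral_cmult) measurable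
    finally show ?thesis .
  qed
  also have "\<dots> = Q" by (simp add: int_inv_sq)
  also have "Q \<le> ennreal R * (\<integral>\<^sup>+z. ennreal (norm (gr z)) * indicator (cball c R) z \<partial>lborel)"
  proof -
    have "Q \<le> (\<integral>\<^sup>+z. ennreal R * (ennreal (norm (gr z)) * indicator (cball c R) z) \<partial>lborel)"
      unfolding Q_def q_def
    proof (intro nn_integral_mono)
      fix z
      show "ennreal (norm (gr z) * norm (z - c) * indicator (cball c R) z)
          \<le> ennreal R * (ennreal (norm (gr z)) * indicator (cball c R) z)"
      proof (cases "z \<in> cball c R")
        case True
        then have "norm (z - c) \<le> R" by (simp add: dist_norm norm_minus_commute)
        then have "norm (gr z) * norm (z - c) \<le> R * norm (gr z)"
          by (metis mult.commute mult_left_mono norm_ge_zero)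
        then show ?thesis using True R by (simp add: ennreal_mult[symmetric])
      qed simp
    qed
    also have "\<dots> = ennreal R * (\<integral>\<^sup>+z. ennreal (norm (gr z)) * indicator (cball c R) z \<partial>lborel)"
      by (rule nn_integral_cmult) measurable
    finally show ?thesis .
  qed
  also have "(\<integral>\<^sup>+z. ennreal (norm (gr z)) * indicator (cball c R) z \<partial>lborel)
      = (\<integral>\<^sup>+z. ennreal (norm (gr z)) * indicator ?B z \<partial>lborel)"
    by (rule nn_cball_ball)
  finally show ?thesis by (simp add: add_left_mono)
qed


lemma borel_lon:
  fixes f :: "'a::euclidean_space \<Rightarrow> 'b::topological_space"
  assumes "f \<in> borel_measurable borel"
  shows "f \<in> borel_measurable (lebesgue_on S)"
proof -
  have "f \<in> borel_measurable lborel" using assms by simp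
  then have "f \<in> borel_measurable lebesgue" by (rule measurable_completion)
  then show ?thesis by (rule measurable_restrict_space1)
qed

lemma emeasure_lon_ball: "emeasure (lebesgue_on (ball c R)) (ball (c::'a::euclidean_space) R) = emeasure lborel (ball c R)"
  by (subst emeasure_restrict_space) (auto simp: emeasure_completion)

lemma finite_lon_ball: "finite_measure (lebesgue_on (ball (c::'a::euclidean_space) R))"
proof (rule finite_measureI)
  show "emeasure (lebesgue_on (ball c R)) (space (lebesgue_on (ball c R))) \<noteq> \<infinity>"
  proof (cases "0 \<le> R")
    case True
    then show ?thesis by (simp add: emeasure_lon_ball emeasure_ball)
  next
    case False
    then show ?thesis by (simp add: emeasure_lon_ball ball_empty)
  qed
qed

lemma measure_lon_ball: "measure (lebesgue_on (ball c R)) (ball (c::'a::euclidean_space) R) = measure lebesgue (ball c R)"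
  by (subst measure_restrict_space) auto

lemma emeasure_lborel_ball_V: "emeasure lborel (ball (c::'a::euclidean_space) R) = ennreal (measure lebesgue (ball c R))"
proof (cases "0 \<le> R")
  case True
  then show ?thesis by (simp add: emeasure_ball measure_def)
qed (simp add: measure_def ball_empty)

lemma bounded_int_lon:
  fixes f :: "'a::euclidean_space \<Rightarrow> real"
  assumes "f \<in> borel_measurable (lebesgue_on (ball c R))" "\<And>x. x \<in> ball c R \<Longrightarrow> \<bar>f x\<bar> \<le> M"
  shows "integrable (lebesgue_on (ball c R)) f"
proof -
  have "AE x in lebesgue_on (ball c R). norm (f x) \<le> M"
    by (rule AE_I2) (use assms(2) in \<open>simp add: space_restrict_space\<close>)
  then show ?thesis
    by (rule finite_measure.integrable_const_bound[OF finite_lon_ball]) (rule assms(1))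
qed

lemma nn_eq_lon:
  fixes f :: "'a::euclidean_space \<Rightarrow> real"
  assumes [measurable]: "f \<in> borel_measurable borel" and nn: "\<And>x. x \<in> ball c R \<Longrightarrow> 0 \<le> f x"
    and int: "integrable (lebesgue_on (ball c R)) f"
  shows "(\<integral>\<^sup>+x. ennreal (f x) * indicator (ball c R) x \<partial>lborel) = ennreal (\<integral>x. f x \<partial>lebesgue_on (ball c R))"
proof -
  have "ennreal (\<integral>x. f x \<partial>lebesgue_on (ball c R)) = (\<integral>\<^sup>+x. ennreal (f x) \<partial>lebesgue_on (ball c R))"
    using int nn by (subst nn_integral_eq_integral) (auto simp: AE_restrict_space_iff space_restrict_space)
  also have "\<dots> = (\<integral>\<^sup>+x. ennreal (f x) * indicator (ball c R) x \<partial>lebesgue)"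
    by (subst nn_integral_restrict_space) auto
  also have "\<dots> = (\<integral>\<^sup>+x. ennreal (f x) * indicator (ball c R) x \<partial>lborel)"
    by (rule nn_integral_completion)
  finally show ?thesis ..
qed

lemma CS_L:
  fixes f g :: "'a \<Rightarrow> real"
  assumes [measurable]: "f \<in> borel_measurable M" "g \<in> borel_measurable M"
    and fi: "integrable M (\<lambda>x. (f x)^2)" and gi: "integrable M (\<lambda>x. (g x)^2)"
  shows "integrable M (\<lambda>x. f x * g x)" and "(\<integral>x. f x * g x \<partial>M)^2 \<le> (\<integral>x. (f x)^2 \<partial>M) * (\<integral>x. (g x)^2 \<partial>M)"
proof -
  have fgi: "integrable M (\<lambda>x. ((f x)^2 + (g x)^2) / 2)" using fi gi by auto
  show fg: "integrable M (\<lambda>x. f x * g x)"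
  proof (rule Bochner_Integration.integrable_bound[OF fgi])
    show "AE x in M. norm (f x * g x) \<le> norm (((f x)^2 + (g x)^2) / 2)"
    proof (intro AE_I2)
      fix x
      have "0 \<le> (\<bar>f x\<bar> - \<bar>g x\<bar>)^2" by simp
      then have "\<bar>f x\<bar> * \<bar>g x\<bar> \<le> ((f x)^2 + (g x)^2) / 2"
        by (simp add: power2_diff power2_abs)
      moreover have "norm (f x * g x) = \<bar>f x\<bar> * \<bar>g x\<bar>" by (simp only: real_norm_def abs_mult)
      moreover have "norm (((f x)^2 + (g x)^2) / 2) = ((f x)^2 + (g x)^2) / 2"
        by (simp only: real_norm_def) (simp add: abs_of_nonneg)
      ultimately show "norm (f x * g x) \<le> norm (((f x)^2 + (g x)^2) / 2)"
        by linarith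
    qed
  qed measurable
  have afg: "integrable M (\<lambda>x. \<bar>f x\<bar> * \<bar>g x\<bar>)" using integrable_abs[OF fg] by (simp add: abs_mult)
  have "(\<integral>\<^sup>+x. ennreal \<bar>f x\<bar> * ennreal \<bar>g x\<bar> \<partial>M)^2 \<le> (\<integral>\<^sup>+x. (ennreal \<bar>f x\<bar>)^2 \<partial>M) * (\<integral>\<^sup>+x. (ennreal \<bar>g x\<bar>)^2 \<partial>M)"
    by (rule Cauchy_Schwarz_nn_integral) measurable
  also have "(\<integral>\<^sup>+x. (ennreal \<bar>f x\<bar>)^2 \<partial>M) = ennreal (\<integral>x. (f x)^2 \<partial>M)"
    using fi by (subst nn_integral_eq_integral[symmetric]) (auto simp: ennreal_power)
  also have "(\<integral>\<^sup>+x. (ennreal \<bar>g x\<bar>)^2 \<partial>M) = ennreal (\<integral>x. (g x)^2 \<partial>M)"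
    using gi by (subst nn_integral_eq_integral[symmetric]) (auto simp: ennreal_power)
  also have "(\<integral>\<^sup>+x. ennreal \<bar>f x\<bar> * ennreal \<bar>g x\<bar> \<partial>M) = ennreal (\<integral>x. \<bar>f x\<bar> * \<bar>g x\<bar> \<partial>M)"
    using afg by (subst nn_integral_eq_integral[symmetric]) (auto simp: ennreal_mult)
  finally have "ennreal ((\<integral>x. \<bar>f x\<bar> * \<bar>g x\<bar> \<partial>M)^2) \<le> ennreal ((\<integral>x. (f x)^2 \<partial>M) * (\<integral>x. (g x)^2 \<partial>M))"
    by (simp add: ennreal_power ennreal_mult[symmetric])
  then have 1: "(\<integral>x. \<bar>f x\<bar> * \<bar>g x\<bar> \<partial>M)^2 \<le> (\<integral>x. (f x)^2 \<partial>M) * (\<integral>x. (g x)^2 \<partial>M)"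
    by (subst (asm) ennreal_le_iff) auto
  have "\<bar>\<integral>x. f x * g x \<partial>M\<bar> \<le> (\<integral>x. \<bar>f x\<bar> * \<bar>g x\<bar> \<partial>M)"
    using integral_abs_bound[of M "\<lambda>x. f x * g x"] by (simp add: abs_mult)
  then have "(\<integral>x. f x * g x \<partial>M)^2 \<le> (\<integral>x. \<bar>f x\<bar> * \<bar>g x\<bar> \<partial>M)^2"
    by (metis abs_ge_zero power2_abs power_mono)
  with 1 show "(\<integral>x. f x * g x \<partial>M)^2 \<le> (\<integral>x. (f x)^2 \<partial>M) * (\<integral>x. (g x)^2 \<partial>M)" by linarith
qed


lemma cont_bounded_cball:
  fixes f :: "'a::euclidean_space \<Rightarrow> 'b::real_normed_vector"
  assumes "continuous_on UNIV f"
  shows "\<exists>M. \<forall>x\<in>cball c R. norm (f x) \<le> M"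
proof -
  have "compact (f ` cball c R)"
    by (rule compact_continuous_image[OF continuous_on_subset[OF assms]]) auto
  then have "bounded (f ` cball c R)" by (rule compact_imp_bounded)
  then show ?thesis by (auto simp: bounded_iff)
qed

lemma int_cont_lon:
  fixes f :: "'a::euclidean_space \<Rightarrow> real"
  assumes "continuous_on UNIV f"
  shows "integrable (lebesgue_on (ball c R)) f"
proof -
  obtain M where M: "\<forall>x\<in>cball c R. norm (f x) \<le> M" using cont_bounded_cball[OF assms] by blast
  show ?thesis
    by (rule bounded_int_lon[where M=M]) (use M assms in \<open>auto intro!: borel_lon borel_measurable_continuous_onI\<close>)
qed

lemma deriv_cont:
  assumes dv: "\<And>x. (v has_derivative (\<lambda>h. gr x \<bullet> h)) (at x)"
  shows "continuous_on UNIV v"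
  using dv by (metis continuous_at_imp_continuous_on has_derivative_continuous)

lemma poincare_real:
  fixes v :: "'a::euclidean_space \<Rightarrow> real" and gr :: "'a \<Rightarrow> 'a"
  assumes dv: "\<And>x. (v has_derivative (\<lambda>h. gr x \<bullet> h)) (at x)"
    and cg: "continuous_on UNIV gr" and R: "0 < R"
  shows "\<exists>a. (\<integral>x. (v x - a)^2 \<partial>lebesgue_on (ball c R))
     \<le> 4 * R^2 * 2^DIM('a) * (\<integral>x. (norm (gr x))^2 \<partial>lebesgue_on (ball c R))"
proof -
  let ?B = "ball c R"
  have cv: "continuous_on UNIV v" by (rule deriv_cont[OF dv])
  have [measurable]: "v \<in> borel_measurable borel" "gr \<in> borel_measurable borel"
    using cv cg by (auto intro: borel_measurable_continuous_onI)
  define G2 where "G2 = (\<integral>x. (norm (gr x))^2 \<partial>lebesgue_on ?B)"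
  have G2: "(\<integral>\<^sup>+z. ennreal (norm (gr z)^2) * indicator ?B z \<partial>lborel) = ennreal G2"
    unfolding G2_def
    by (rule nn_eq_lon) (auto intro!: int_cont_lon continuous_intros cg)
  have G2nn: "0 \<le> G2" unfolding G2_def by (rule integral_nonneg_AE) auto
  define g where "g x = (\<integral>\<^sup>+y. ennreal ((v y - v x)^2) * indicator ?B y \<partial>lborel)" for x
  have [measurable]: "g \<in> borel_measurable borel" unfolding g_def by measurable
  have "(\<integral>\<^sup>+x. g x * indicator ?B x \<partial>lborel)
     \<le> ennreal (4 * R^2) * (ennreal (2^DIM('a)) * emeasure lborel ?B * ennreal G2)"
    using poincare_nn[OF dv cg, of c R] unfolding g_def G2 .
  also have "\<dots> = ennreal (4 * R^2 * 2^DIM('a) * G2) * emeasure lborel ?B"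
  proof -
    have "ennreal (4 * R^2 * 2^DIM('a) * G2) = ennreal (4 * R^2) * ennreal (2^DIM('a)) * ennreal G2"
      using G2nn by (simp add: ennreal_mult)
    then show ?thesis by (simp add: mult_ac)
  qed
  finally have le: "(\<integral>\<^sup>+x. g x * indicator ?B x \<partial>lborel) \<le> ennreal (4 * R^2 * 2^DIM('a) * G2) * emeasure lborel ?B" .
  have "emeasure lborel ?B \<noteq> 0" proof -
    have u: "unit_ball_vol (real DIM('a)) \<noteq> 0" by (metis less_irrefl unit_ball_vol_pos of_nat_0_le_iff)
    show ?thesis using R u by (simp add: emeasure_ball)
  qed
  moreover have "emeasure lborel ?B \<noteq> \<infinity>" using R by (simp add: emeasure_ball)
  ultimately obtain x0 where x0: "x0 \<in> ?B" "g x0 \<le> ennreal (4 * R^2 * 2^DIM('a) * G2)"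
    using exists_good_point[of g ?B "ennreal (4 * R^2 * 2^DIM('a) * G2)"] le by auto
  have "g x0 = ennreal (\<integral>x. (v x - v x0)^2 \<partial>lebesgue_on ?B)"
    unfolding g_def by (rule nn_eq_lon) (auto intro!: int_cont_lon continuous_intros cv)
  with x0 have "(\<integral>x. (v x - v x0)^2 \<partial>lebesgue_on ?B) \<le> 4 * R^2 * 2^DIM('a) * G2"
    using G2nn by (simp add: ennreal_le_iff)
  then show ?thesis unfolding G2_def by blast
qed

lemma space_lon: "space (lebesgue_on S) = S"
  by (simp add: space_restrict_space)

lemma integral_const_lon: "(\<integral>x. (k::real) \<partial>lebesgue_on (ball c R)) = measure lebesgue (ball (c::'a::euclidean_space) R) * k"
  by (simp add: space_lon measure_lon_ball)

lemma trace_real: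
  fixes v :: "'a::euclidean_space \<Rightarrow> real" and gr :: "'a \<Rightarrow> 'a"
  assumes dv: "\<And>x. (v has_derivative (\<lambda>h. gr x \<bullet> h)) (at x)"
    and cg: "continuous_on UNIV gr" and R: "0 < R"
  shows "measure lebesgue (ball c R) * \<bar>a\<bar> - (\<integral>x. \<bar>v x - a\<bar> \<partial>lebesgue_on (ball c R))
      - R * (\<integral>x. norm (gr x) \<partial>lebesgue_on (ball c R))
    \<le> (\<integral>x. \<bar>v (c + (R / norm (x - c)) *\<^sub>R (x - c))\<bar> \<partial>lebesgue_on (ball c R))"
proof -
  let ?B = "ball c R"
  define w where "w x = v x - a" for x
  have dvw: "(w has_derivative (\<lambda>h. gr x \<bullet> h)) (at x)" for x
    using has_derivative_diff[OF dv[of x] has_derivative_const[of a]] unfolding w_def by simp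
  have cv: "continuous_on UNIV v" by (rule deriv_cont[OF dv])
  have cw: "continuous_on UNIV w" by (rule deriv_cont[OF dvw])
  have [measurable]: "v \<in> borel_measurable borel" "w \<in> borel_measurable borel" "gr \<in> borel_measurable borel"
    using cv cw cg by (auto intro: borel_measurable_continuous_onI)
  define p where "p x = c + (R / norm (x - c)) *\<^sub>R (x - c)" for x
  have [measurable]: "p \<in> borel_measurable borel" unfolding p_def by measurable
  have pc: "p x \<in> cball c R" for x
  proof (cases "x = c")
    case False
    then have "norm (p x - c) = R" using R by (simp add: p_def)
    then show ?thesis by (simp add: dist_norm norm_minus_commute)
  qed (use R in \<open>simp add: p_def\<close>)
  obtain Mv where Mv: "\<forall>x\<in>cball c R. norm (v x) \<le> Mv" using cont_bounded_cball[OF cv] by blast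
  obtain Mw where Mw: "\<forall>x\<in>cball c R. norm (w x) \<le> Mw" using cont_bounded_cball[OF cw] by blast
  have ivp: "integrable (lebesgue_on ?B) (\<lambda>x. \<bar>v (p x)\<bar>)"
    by (rule bounded_int_lon[where M=Mv]) (use Mv pc in \<open>auto intro!: borel_lon\<close>)
  have iwp: "integrable (lebesgue_on ?B) (\<lambda>x. \<bar>w (p x)\<bar>)"
    by (rule bounded_int_lon[where M=Mw]) (use Mw pc in \<open>auto intro!: borel_lon\<close>)
  have iw: "integrable (lebesgue_on ?B) (\<lambda>x. \<bar>w x\<bar>)"
    by (rule int_cont_lon) (intro continuous_intros cw)
  have ig: "integrable (lebesgue_on ?B) (\<lambda>x. norm (gr x))"
    by (rule int_cont_lon) (intro continuous_intros cg)
  have "ennreal (\<integral>x. \<bar>w (p x)\<bar> \<partial>lebesgue_on ?B)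
      \<le> ennreal (\<integral>x. \<bar>w x\<bar> \<partial>lebesgue_on ?B) + ennreal R * ennreal (\<integral>x. norm (gr x) \<partial>lebesgue_on ?B)"
    using trace_nn[OF dvw cg R, of c]
    unfolding p_def[symmetric] nn_eq_lon[OF _ _ iwp, simplified] nn_eq_lon[OF _ _ iw, simplified]
      nn_eq_lon[OF _ _ ig, simplified] .
  also have "\<dots> = ennreal ((\<integral>x. \<bar>w x\<bar> \<partial>lebesgue_on ?B) + R * (\<integral>x. norm (gr x) \<partial>lebesgue_on ?B))"
    using R by (simp add: ennreal_mult ennreal_plus integral_nonneg_AE)
  finally have tr: "(\<integral>x. \<bar>w (p x)\<bar> \<partial>lebesgue_on ?B) \<le> (\<integral>x. \<bar>w x\<bar> \<partial>lebesgue_on ?B) + R * (\<integral>x. norm (gr x) \<partial>lebesgue_on ?B)"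
    using R by (subst (asm) ennreal_le_iff) (auto intro!: add_nonneg_nonneg integral_nonneg_AE)
  have "(\<integral>x. \<bar>a\<bar> - \<bar>w (p x)\<bar> \<partial>lebesgue_on ?B) \<le> (\<integral>x. \<bar>v (p x)\<bar> \<partial>lebesgue_on ?B)"
  proof (rule integral_mono[OF _ ivp])
    have ic: "integrable (lebesgue_on ?B) (\<lambda>x. \<bar>a\<bar>)"
      using finite_measure.integrable_const[OF finite_lon_ball] by blast
    show "integrable (lebesgue_on ?B) (\<lambda>x. \<bar>a\<bar> - \<bar>w (p x)\<bar>)"
      by (intro Bochner_Integration.integrable_diff ic iwp)
    fix x show "\<bar>a\<bar> - \<bar>w (p x)\<bar> \<le> \<bar>v (p x)\<bar>" unfolding w_def by arith
  qed
  also have "(\<integral>x. \<bar>a\<bar> - \<bar>w (p x)\<bar> \<partial>lebesgue_on ?B) = measure lebesgue ?B * \<bar>a\<bar> - (\<integral>x. \<bar>w (p x)\<bar> \<partial>lebesgue_on ?B)"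
  proof -
    have ic: "integrable (lebesgue_on ?B) (\<lambda>x. \<bar>a\<bar>)"
      using finite_measure.integrable_const[OF finite_lon_ball] by blast
    show ?thesis
      using iwp ic by (simp add: Bochner_Integration.integral_diff integral_const_lon measure_lon_ball)
  qed
  finally show ?thesis using tr unfolding w_def p_def by linarith
qed


lemma final_alg:
  fixes P V CT CP e x G S N m :: real
  assumes V: "0 < V" and P: "0 \<le> P" and CT: "0 \<le> CT" and CP: "0 \<le> CP" and e: "0 < e" "e < 1"
    and x: "0 \<le> x" and G: "0 \<le> G" and S: "0 \<le> S" and N: "0 \<le> N"
    and hS: "P * x - CT * G \<le> S" and hN: "N \<le> x * sqrt V + sqrt CP * G"
    and m: "(CT^2 + P^2 / V * CP) / e \<le> m"
  shows "P^2 / V * ((1 - e) / (1 + e)) * N^2 \<le> m * G^2 + S^2"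
proof -
  define A where "A = x * sqrt V"
  define B where "B = sqrt CP * G"
  have A2: "A^2 = x^2 * V" using V by (simp add: A_def power_mult_distrib)
  have B2: "B^2 = CP * G^2" using CP by (simp add: B_def power_mult_distrib)
  have AB: "2 * A * B \<le> e * A^2 + B^2 / e"
  proof -
    have "0 \<le> (e * A - B)^2 / e" using e by simp
    also have "(e * A - B)^2 / e = e * A^2 + B^2 / e - 2 * A * B"
      using e by (simp add: power2_eq_square field_simps)
    finally show ?thesis by simp
  qed
  have N2: "N^2 \<le> (A + B)^2" using N hN unfolding A_def B_def by (intro power_mono) auto
  also have "(A + B)^2 = A^2 + 2 * A * B + B^2" by (simp add: power2_eq_square algebra_simps)
  finally have hA: "N^2 \<le> (1 + e) * (x^2 * V) + (1 + 1 / e) * (CP * G^2)"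
    using AB A2 B2 by (simp add: algebra_simps add_divide_distrib)
  have hB: "(1 - e) * (P * x)^2 - (CT * G)^2 / e \<le> S^2"
  proof (cases "CT * G \<le> P * x")
    case True
    have "2 * (P * x) * (CT * G) \<le> e * (P * x)^2 + (CT * G)^2 / e"
    proof -
      have "0 \<le> (e * (P * x) - CT * G)^2 / e" using e by simp
      also have "(e * (P * x) - CT * G)^2 / e = e * (P * x)^2 + (CT * G)^2 / e - 2 * (P * x) * (CT * G)"
        using e by (simp add: power2_eq_square field_simps)
      finally show ?thesis by simp
    qed
    moreover have "(P * x - CT * G)^2 = (P * x)^2 - 2 * (P * x) * (CT * G) + (CT * G)^2"
      by (simp add: power2_eq_square algebra_simps)
    moreover have "(1 - e) * (P * x)^2 = (P * x)^2 - e * (P * x)^2" by (simp add: algebra_simps)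
    moreover have "0 \<le> (CT * G)^2" by simp
    ultimately have "(1 - e) * (P * x)^2 - (CT * G)^2 / e \<le> (P * x - CT * G)^2"
      by linarith
    also have "\<dots> \<le> S^2" using True hS by (intro power_mono) auto
    finally show ?thesis .
  next
    case False
    then have "(P * x)^2 \<le> (CT * G)^2" using P x by (intro power_mono) auto
    moreover have "(CT * G)^2 \<le> (CT * G)^2 / e"
    proof -
      have "(CT * G)^2 * e \<le> (CT * G)^2 * 1" using e by (intro mult_left_mono) auto
      then show ?thesis using e by (simp add: le_divide_eq)
    qed
    moreover have "(1 - e) * (P * x)^2 \<le> 1 * (P * x)^2" using e by (intro mult_right_mono) auto
    ultimately have "(1 - e) * (P * x)^2 - (CT * G)^2 / e \<le> 0" by linarith
    also have "0 \<le> S^2" by simp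
    finally show ?thesis .
  qed
  define k where "k = P^2 / V * ((1 - e) / (1 + e))"
  have k: "0 \<le> k" using e V by (simp add: k_def)
  have "k * N^2 \<le> k * ((1 + e) * (x^2 * V) + (1 + 1 / e) * (CP * G^2))"
    using hA k by (rule mult_left_mono)
  also have "\<dots> = (1 - e) * (P * x)^2 + P^2 / V * ((1 - e) / e) * (CP * G^2)"
  proof -
    have ne: "1 + e \<noteq> 0" "e \<noteq> 0" "V \<noteq> 0" using e V by auto
    have k1: "k * (1 + e) = P^2 / V * (1 - e)" unfolding k_def using e by (simp add: mult.assoc)
    have k2: "k * (1 + 1 / e) = P^2 / V * ((1 - e) / e)"
    proof -
      have "(1 + 1 / e) = (1 + e) / e" using e by (simp add: field_simps)
      then show ?thesis unfolding k_def using e by (simp add: mult.assoc)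
    qed
    have "k * ((1 + e) * (x^2 * V) + (1 + 1 / e) * (CP * G^2)) = (k * (1 + e)) * (x^2 * V) + (k * (1 + 1 / e)) * (CP * G^2)"
      by (simp add: algebra_simps)
    also have "\<dots> = (1 - e) * (P * x)^2 + P^2 / V * ((1 - e) / e) * (CP * G^2)"
      unfolding k1 k2 using ne by (simp add: power_mult_distrib)
    finally show ?thesis .
  qed
  also have "\<dots> \<le> (1 - e) * (P * x)^2 + P^2 / V * (1 / e) * (CP * G^2)"
  proof -
    have "(1 - e) / e \<le> 1 / e" using e by (simp add: divide_right_mono)
    then show ?thesis using V CP G by (intro add_left_mono mult_right_mono mult_left_mono) auto
  qed
  also have "\<dots> \<le> S^2 + (CT * G)^2 / e + P^2 / V * (1 / e) * (CP * G^2)"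
    using hB by linarith
  also have "\<dots> = S^2 + ((CT^2 + P^2 / V * CP) / e) * G^2"
    using e by (simp add: field_simps power2_eq_square)
  also have "\<dots> \<le> S^2 + m * G^2"
    using m by (intro add_left_mono mult_right_mono) auto
  finally show ?thesis unfolding k_def by simp
qed


lemma CS1:
  fixes f :: "'a::euclidean_space \<Rightarrow> real"
  assumes fm: "f \<in> borel_measurable (lebesgue_on (ball c R))"
    and fi: "integrable (lebesgue_on (ball c R)) (\<lambda>x. (f x)^2)"
  shows "(\<integral>x. \<bar>f x\<bar> \<partial>lebesgue_on (ball c R))^2 \<le> measure lebesgue (ball c R) * (\<integral>x. (f x)^2 \<partial>lebesgue_on (ball c R))"
proof -
  have ic: "integrable (lebesgue_on (ball c R)) (\<lambda>x. (1::real)^2)"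
    using finite_measure.integrable_const[OF finite_lon_ball] by simp
  have "(\<integral>x. \<bar>f x\<bar> * 1 \<partial>lebesgue_on (ball c R))^2
     \<le> (\<integral>x. (\<bar>f x\<bar>)^2 \<partial>lebesgue_on (ball c R)) * (\<integral>x. (1::real)^2 \<partial>lebesgue_on (ball c R))"
    by (rule CS_L(2)) (use fm fi ic in auto)
  then show ?thesis by (simp add: integral_const_lon measure_lon_ball mult.commute)
qed

lemma smooth_key:
  fixes v :: "'a::euclidean_space \<Rightarrow> real" and gr :: "'a \<Rightarrow> 'a"
  assumes dv: "\<And>x. (v has_derivative (\<lambda>h. gr x \<bullet> h)) (at x)"
    and cg: "continuous_on UNIV gr" and R: "0 < R" and e: "0 < e" "e < 1"
    and m: "((real DIM('a) / R * sqrt (measure lebesgue (ball c R) * (4 * R^2 * 2^DIM('a))) + real DIM('a) * sqrt (measure lebesgue (ball c R)))^2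
        + (real DIM('a) / R * measure lebesgue (ball c R))^2 / measure lebesgue (ball c R) * (4 * R^2 * 2^DIM('a))) / e \<le> m"
  shows "(real DIM('a) / R * measure lebesgue (ball c R))^2 / measure lebesgue (ball c R) * ((1 - e) / (1 + e))
       * (\<integral>x. (v x)^2 \<partial>lebesgue_on (ball c R))
     \<le> m * (\<integral>x. (norm (gr x))^2 \<partial>lebesgue_on (ball c R))
       + (real DIM('a) / R * (\<integral>x. \<bar>v (c + (R / norm (x - c)) *\<^sub>R (x - c))\<bar> \<partial>lebesgue_on (ball c R)))^2"
proof -
  let ?B = "ball c R"
  let ?M = "lebesgue_on ?B"
  define V where "V = measure lebesgue ?B"
  define n where "n = real DIM('a)"
  define P where "P = n / R * V"
  define CP where "CP = 4 * R^2 * 2^DIM('a)"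
  define CT where "CT = n / R * sqrt (V * CP) + n * sqrt V"
  have V: "0 < V" unfolding V_def using R by simp
  have n: "0 < n" unfolding n_def by simp
  have CP: "0 \<le> CP" unfolding CP_def by simp
  have CT: "0 \<le> CT" unfolding CT_def using n R V CP by simp
  have P: "0 \<le> P" unfolding P_def using n R V by simp
  have cv: "continuous_on UNIV v" by (rule deriv_cont[OF dv])
  obtain a where a: "(\<integral>x. (v x - a)^2 \<partial>?M) \<le> CP * (\<integral>x. (norm (gr x))^2 \<partial>?M)"
    using poincare_real[OF dv cg R, of c] unfolding CP_def by blast
  define G2 where "G2 = (\<integral>x. (norm (gr x))^2 \<partial>?M)"
  define W where "W = (\<integral>x. (v x - a)^2 \<partial>?M)"
  define N2 where "N2 = (\<integral>x. (v x)^2 \<partial>?M)"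
  define T where "T = (\<integral>x. \<bar>v (c + (R / norm (x - c)) *\<^sub>R (x - c))\<bar> \<partial>?M)"
  define S where "S = n / R * T"
  have G2: "0 \<le> G2" unfolding G2_def by (rule integral_nonneg_AE) auto
  have W: "0 \<le> W" unfolding W_def by (rule integral_nonneg_AE) auto
  have N2: "0 \<le> N2" unfolding N2_def by (rule integral_nonneg_AE) auto
  have T: "0 \<le> T" unfolding T_def by (rule integral_nonneg_AE) auto
  have S: "0 \<le> S" unfolding S_def using n R T by simp
  have WG: "W \<le> CP * G2" using a unfolding W_def G2_def .
  have [measurable]: "v \<in> borel_measurable borel" "gr \<in> borel_measurable borel"
    using cv cg by (auto intro: borel_measurable_continuous_onI)
  have iva: "integrable ?M (\<lambda>x. v x - a)" by (rule int_cont_lon) (intro continuous_intros cv)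
  have iva2: "integrable ?M (\<lambda>x. (v x - a)^2)" by (rule int_cont_lon) (intro continuous_intros cv)
  have igr2: "integrable ?M (\<lambda>x. (norm (gr x))^2)" by (rule int_cont_lon) (intro continuous_intros cg)
  have c1: "(\<integral>x. \<bar>v x - a\<bar> \<partial>?M)^2 \<le> V * W"
    unfolding V_def W_def by (rule CS1) (auto intro!: borel_lon iva2)
  have c2: "(\<integral>x. \<bar>norm (gr x)\<bar> \<partial>?M)^2 \<le> V * G2"
    unfolding V_def G2_def by (rule CS1) (auto intro!: borel_lon igr2)
  define G where "G = sqrt G2"
  have GG: "G^2 = G2" using G2 by (simp add: G_def)
  have G: "0 \<le> G" using G2 by (simp add: G_def)
  have i1: "(\<integral>x. \<bar>v x - a\<bar> \<partial>?M) \<le> sqrt (V * CP) * G"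
  proof -
    have "(\<integral>x. \<bar>v x - a\<bar> \<partial>?M) \<le> sqrt (V * W)"
      using c1 by (intro real_le_rsqrt) auto
    also have "\<dots> \<le> sqrt (V * (CP * G2))" using WG V by (intro real_sqrt_le_mono mult_left_mono) auto
    also have "\<dots> = sqrt (V * CP) * G" by (simp add: G_def real_sqrt_mult mult.assoc)
    finally show ?thesis .
  qed
  have i2: "(\<integral>x. norm (gr x) \<partial>?M) \<le> sqrt V * G"
  proof -
    have "(\<integral>x. norm (gr x) \<partial>?M) \<le> sqrt (V * G2)"
      using c2 by (intro real_le_rsqrt) auto
    also have "\<dots> = sqrt V * G" by (simp add: G_def real_sqrt_mult)
    finally show ?thesis .
  qed
  have tr: "V * \<bar>a\<bar> - (\<integral>x. \<bar>v x - a\<bar> \<partial>?M) - R * (\<integral>x. norm (gr x) \<partial>?M) \<le> T"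
    unfolding V_def T_def by (rule trace_real[OF dv cg R])
  have hS: "P * \<bar>a\<bar> - CT * G \<le> S"
  proof -
    have "V * \<bar>a\<bar> - sqrt (V * CP) * G - R * (sqrt V * G) \<le> T"
    proof -
      have "R * (\<integral>x. norm (gr x) \<partial>?M) \<le> R * (sqrt V * G)" using i2 R by (intro mult_left_mono) auto
      then show ?thesis using tr i1 by linarith
    qed
    then have "n / R * (V * \<bar>a\<bar> - sqrt (V * CP) * G - R * (sqrt V * G)) \<le> n / R * T"
      using n R by (intro mult_left_mono) auto
    then show ?thesis unfolding S_def P_def CT_def using R by (simp add: algebra_simps)
  qed
  have hN: "sqrt N2 \<le> \<bar>a\<bar> * sqrt V + sqrt CP * G"
  proof -
    have e1: "N2 = W + 2 * a * (\<integral>x. v x - a \<partial>?M) + a^2 * V"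
    proof -
      have "N2 = (\<integral>x. (v x - a)^2 + (2 * a * (v x - a) + a^2) \<partial>?M)"
        unfolding N2_def by (intro Bochner_Integration.integral_cong) (auto simp: power2_eq_square algebra_simps)
      also have "\<dots> = W + (2 * a * (\<integral>x. v x - a \<partial>?M) + a^2 * V)"
      proof -
        have ic: "integrable ?M (\<lambda>x. a^2)" using finite_measure.integrable_const[OF finite_lon_ball] by blast
        have i3: "integrable ?M (\<lambda>x. 2 * a * (v x - a))" using iva by simp
        have "(\<integral>x. (v x - a)^2 + (2 * a * (v x - a) + a^2) \<partial>?M) = W + (\<integral>x. 2 * a * (v x - a) + a^2 \<partial>?M)"
          unfolding W_def by (rule Bochner_Integration.integral_add[OF iva2]) (use i3 ic in simp)
        also have "(\<integral>x. 2 * a * (v x - a) + a^2 \<partial>?M) = (\<integral>x. 2 * a * (v x - a) \<partial>?M) + (\<integral>x. a^2 \<partial>?M)"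
          by (rule Bochner_Integration.integral_add[OF i3 ic])
        also have "(\<integral>x. a^2 \<partial>?M) = a^2 * V" unfolding V_def by (simp add: integral_const_lon measure_lon_ball)
        also have "(\<integral>x. 2 * a * (v x - a) \<partial>?M) = 2 * a * (\<integral>x. v x - a \<partial>?M)" by simp
        finally show ?thesis .
      qed
      finally show ?thesis by simp
    qed
    have "\<bar>\<integral>x. v x - a \<partial>?M\<bar> \<le> (\<integral>x. \<bar>v x - a\<bar> \<partial>?M)" by (rule integral_abs_bound)
    also have "\<dots> \<le> sqrt (V * W)" using c1 by (intro real_le_rsqrt) auto
    finally have "\<bar>\<integral>x. v x - a \<partial>?M\<bar> \<le> sqrt V * sqrt W" by (simp add: real_sqrt_mult)
    then have "2 * a * (\<integral>x. v x - a \<partial>?M) \<le> 2 * \<bar>a\<bar> * (sqrt V * sqrt W)"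
    proof -
      assume h: "\<bar>\<integral>x. v x - a \<partial>?M\<bar> \<le> sqrt V * sqrt W"
      have "a * (\<integral>x. v x - a \<partial>?M) \<le> \<bar>a\<bar> * \<bar>\<integral>x. v x - a \<partial>?M\<bar>"
        by (metis abs_ge_self abs_mult)
      also have "\<dots> \<le> \<bar>a\<bar> * (sqrt V * sqrt W)" using h by (intro mult_left_mono) auto
      finally show ?thesis by simp
    qed
    moreover have "(\<bar>a\<bar> * sqrt V + sqrt W)^2 = a^2 * V + 2 * \<bar>a\<bar> * (sqrt V * sqrt W) + W"
    proof -
      have "(\<bar>a\<bar> * sqrt V + sqrt W)^2 = \<bar>a\<bar>^2 * (sqrt V)^2 + 2 * \<bar>a\<bar> * (sqrt V * sqrt W) + (sqrt W)^2"
        by (simp add: power2_eq_square algebra_simps)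
      then show ?thesis using V W by simp
    qed
    ultimately have "N2 \<le> (\<bar>a\<bar> * sqrt V + sqrt W)^2"
      using e1 by linarith
    then have "sqrt N2 \<le> sqrt ((\<bar>a\<bar> * sqrt V + sqrt W)^2)" by (rule real_sqrt_le_mono)
    also have "\<dots> = \<bar>a\<bar> * sqrt V + sqrt W" using V W by simp
    finally have "sqrt N2 \<le> \<bar>a\<bar> * sqrt V + sqrt W" .
    also have "sqrt W \<le> sqrt CP * G"
      using WG by (simp add: G_def real_sqrt_mult[symmetric])
    finally show ?thesis by simp
  qed
  have "P^2 / V * ((1 - e) / (1 + e)) * (sqrt N2)^2 \<le> m * G^2 + S^2"
    by (rule final_alg[OF V P CT CP e abs_ge_zero G S real_sqrt_ge_zero[OF N2] hS hN])
       (use m in \<open>simp add: CT_def P_def CP_def V_def n_def\<close>)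
  then show ?thesis using N2 GG unfolding N2_def G2_def S_def T_def P_def V_def n_def by simp
qed


lemma smooth_onD:
  assumes "smooth_on f S"
  shows "open S" "f differentiable_on S" "\<And>i. smooth_on (pd i f) S"
  using assms by (auto elim: smooth_on.cases)

lemma smooth_cont:
  assumes "smooth_on f UNIV"
  shows "continuous_on UNIV f"
  using smooth_onD(2)[OF assms] by (rule differentiable_imp_continuous_on)

lemma smooth_grad:
  fixes v :: "real^'n::finite \<Rightarrow> real"
  assumes "smooth_on v UNIV"
  shows "(v has_derivative (\<lambda>h. (\<chi> i. pd i v x) \<bullet> h)) (at x)"
proof -
  have "v differentiable (at x)"
    using smooth_onD(2)[OF assms] by (auto simp: differentiable_on_def)
  then have D: "(v has_derivative frechet_derivative v (at x)) (at x)"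
    by (rule frechet_derivative_works[THEN iffD1])
  then have lin: "linear (frechet_derivative v (at x))"
    by (rule has_derivative_linear)
  have "frechet_derivative v (at x) h = (\<chi> i. pd i v x) \<bullet> h" for h
  proof -
    have "frechet_derivative v (at x) h = frechet_derivative v (at x) (\<Sum>i\<in>UNIV. h $ i *s axis i 1)"
      by (simp add: basis_expansion)
    also have "\<dots> = (\<Sum>i\<in>UNIV. h $ i * frechet_derivative v (at x) (axis i 1))"
      using lin by (simp add: linear_sum linear_cmul scalar_mult_eq_scaleR)
    also have "\<dots> = (\<chi> i. pd i v x) \<bullet> h"
      by (simp add: inner_vec_def pd_def mult.commute)
    finally show ?thesis .
  qed
  then have "frechet_derivative v (at x) = (\<lambda>h. (\<chi> i. pd i v x) \<bullet> h)" by auto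
  with D show ?thesis by simp
qed

lemma smooth_grad_cont:
  fixes v :: "real^'n::finite \<Rightarrow> real"
  assumes "smooth_on v UNIV"
  shows "continuous_on UNIV (\<lambda>x. \<chi> i. pd i v x)"
  by (intro continuous_on_vec_lambda smooth_cont smooth_onD(3)[OF assms])

lemma norm_vec_sq: "(norm (\<chi> i. f i :: real^'n::finite))^2 = (\<Sum>i\<in>UNIV. (f i)^2)"
  by (subst power2_norm_eq_inner) (simp add: inner_vec_def power2_eq_square)

lemma L2conv:
  fixes f :: "'a \<Rightarrow> real" and F :: "nat \<Rightarrow> 'a \<Rightarrow> real"
  assumes [measurable]: "f \<in> borel_measurable M" "\<And>k. F k \<in> borel_measurable M"
    and fi: "integrable M (\<lambda>x. (f x)^2)" and Fi: "\<And>k. integrable M (\<lambda>x. (F k x)^2)"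
    and lim: "(\<lambda>k. \<integral>x. (F k x - f x)^2 \<partial>M) \<longlonglongrightarrow> 0"
  shows "(\<lambda>k. \<integral>x. (F k x)^2 \<partial>M) \<longlonglongrightarrow> (\<integral>x. (f x)^2 \<partial>M)"
proof -
  define d where "d k = (\<integral>x. (F k x - f x)^2 \<partial>M)" for k
  define e where "e k = (\<integral>x. f x * (F k x - f x) \<partial>M)" for k
  have di: "integrable M (\<lambda>x. (F k x - f x)^2)" for k
  proof (rule Bochner_Integration.integrable_bound)
    show "integrable M (\<lambda>x. 2 * (F k x)^2 + 2 * (f x)^2)" using Fi fi by auto
    show "AE x in M. norm ((F k x - f x)^2) \<le> norm (2 * (F k x)^2 + 2 * (f x)^2)"
    proof (intro AE_I2)
      fix x
      have "0 \<le> (F k x + f x)^2" by simp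
      then have "(F k x - f x)^2 \<le> 2 * (F k x)^2 + 2 * (f x)^2"
        by (simp add: power2_diff power2_sum)
      then show "norm ((F k x - f x)^2) \<le> norm (2 * (F k x)^2 + 2 * (f x)^2)"
        by (simp only: real_norm_def) (simp add: abs_of_nonneg)
    qed
  qed measurable
  have ei: "integrable M (\<lambda>x. f x * (F k x - f x))" for k
    by (rule CS_L(1)) (use fi di in auto)
  have ecs: "(e k)^2 \<le> (\<integral>x. (f x)^2 \<partial>M) * d k" for k
    unfolding e_def d_def by (rule CS_L(2)) (use fi di in auto)
  have eq: "(\<integral>x. (F k x)^2 \<partial>M) = d k + 2 * e k + (\<integral>x. (f x)^2 \<partial>M)" for k
  proof -
    have "(\<integral>x. (F k x)^2 \<partial>M) = (\<integral>x. (F k x - f x)^2 + (2 * (f x * (F k x - f x)) + (f x)^2) \<partial>M)"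
      by (intro Bochner_Integration.integral_cong) (auto simp: power2_eq_square algebra_simps)
    also have "\<dots> = d k + (\<integral>x. 2 * (f x * (F k x - f x)) + (f x)^2 \<partial>M)"
      unfolding d_def by (rule Bochner_Integration.integral_add[OF di]) (use ei fi in simp)
    also have "(\<integral>x. 2 * (f x * (F k x - f x)) + (f x)^2 \<partial>M) = (\<integral>x. 2 * (f x * (F k x - f x)) \<partial>M) + (\<integral>x. (f x)^2 \<partial>M)"
      by (rule Bochner_Integration.integral_add) (use ei fi in simp_all)
    also have "(\<integral>x. 2 * (f x * (F k x - f x)) \<partial>M) = 2 * e k" unfolding e_def by simp
    finally show ?thesis by simp
  qed
  have dlim: "d \<longlonglongrightarrow> 0" using lim unfolding d_def .
  have "(\<lambda>k. sqrt ((\<integral>x. (f x)^2 \<partial>M) * d k)) \<longlonglongrightarrow> sqrt ((\<integral>x. (f x)^2 \<partial>M) * 0)"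
    by (intro tendsto_intros dlim)
  then have sl: "(\<lambda>k. sqrt ((\<integral>x. (f x)^2 \<partial>M) * d k)) \<longlonglongrightarrow> 0" by simp
  have "\<bar>e k\<bar> \<le> sqrt ((\<integral>x. (f x)^2 \<partial>M) * d k)" for k
    using ecs[of k] by (simp add: real_le_rsqrt real_sqrt_abs[symmetric] del: real_sqrt_abs)
  then have elim: "e \<longlonglongrightarrow> 0"
    by (intro Lim_null_comparison[OF _ sl]) (auto intro!: always_eventually)
  have "(\<lambda>k. d k + 2 * e k + (\<integral>x. (f x)^2 \<partial>M)) \<longlonglongrightarrow> 0 + 2 * 0 + (\<integral>x. (f x)^2 \<partial>M)"
    by (intro tendsto_intros dlim elim)
  then show ?thesis by (simp add: eq)
qed


lemma pd_const: "pd i (\<lambda>_. k) = (\<lambda>_. 0)"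
  by (simp add: pd_def fun_eq_iff)

lemma const_smooth: "smooth_on (\<lambda>_. k :: real) (UNIV :: (real^'n::finite) set)"
proof -
  have "\<exists>k. f = (\<lambda>_. k :: real) \<and> S = (UNIV :: (real^'n) set) \<Longrightarrow> smooth_on f S" for f S
  proof (coinduction arbitrary: f S rule: smooth_on.coinduct)
    case (smooth_on f S)
    then obtain k where "f = (\<lambda>_. k)" "S = UNIV" by blast
    then show ?case by (auto simp: pd_const)
  qed
  then show ?thesis by blast
qed

lemma diff_sq_int:
  fixes f g :: "'a \<Rightarrow> real"
  assumes [measurable]: "f \<in> borel_measurable M" "g \<in> borel_measurable M"
    and fi: "integrable M (\<lambda>x. (f x)^2)" and gi: "integrable M (\<lambda>x. (g x)^2)"
  shows "integrable M (\<lambda>x. (g x - f x)^2)"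
proof (rule Bochner_Integration.integrable_bound)
  show "integrable M (\<lambda>x. 2 * (g x)^2 + 2 * (f x)^2)" using gi fi by auto
  show "AE x in M. norm ((g x - f x)^2) \<le> norm (2 * (g x)^2 + 2 * (f x)^2)"
  proof (intro AE_I2)
    fix x
    have "0 \<le> (g x + f x)^2" by simp
    then have "(g x - f x)^2 \<le> 2 * (g x)^2 + 2 * (f x)^2"
      by (simp add: power2_diff power2_sum)
    then show "norm ((g x - f x)^2) \<le> norm (2 * (g x)^2 + 2 * (f x)^2)"
      by (simp only: real_norm_def) (simp add: abs_of_nonneg)
  qed
qed measurable

lemma grad_conv:
  fixes g :: "'i::finite \<Rightarrow> 'a \<Rightarrow> real" and D :: "nat \<Rightarrow> 'i \<Rightarrow> 'a \<Rightarrow> real"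
  assumes gm: "\<And>i. g i \<in> borel_measurable M" and Dm: "\<And>k i. D k i \<in> borel_measurable M"
    and gi: "\<And>i. integrable M (\<lambda>x. (g i x)^2)" and Di: "\<And>k i. integrable M (\<lambda>x. (D k i x)^2)"
    and lim: "(\<lambda>k. \<integral>x. (\<Sum>i\<in>UNIV. (D k i x - g i x)^2) \<partial>M) \<longlonglongrightarrow> 0"
  shows "(\<lambda>k. \<integral>x. (\<Sum>i\<in>UNIV. (D k i x)^2) \<partial>M) \<longlonglongrightarrow> (\<integral>x. (\<Sum>i\<in>UNIV. (g i x)^2) \<partial>M)"
proof -
  have dsi: "integrable M (\<lambda>x. (D k i x - g i x)^2)" for k i
    by (rule diff_sq_int[OF gm Dm gi Di])
  have each: "(\<lambda>k. \<integral>x. (D k i x - g i x)^2 \<partial>M) \<longlonglongrightarrow> 0" for i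
  proof (rule tendsto_sandwich[OF _ _ tendsto_const lim])
    show "\<forall>\<^sub>F k in sequentially. 0 \<le> (\<integral>x. (D k i x - g i x)^2 \<partial>M)"
      by (auto intro!: always_eventually integral_nonneg_AE)
    show "\<forall>\<^sub>F k in sequentially. (\<integral>x. (D k i x - g i x)^2 \<partial>M) \<le> (\<integral>x. (\<Sum>i\<in>UNIV. (D k i x - g i x)^2) \<partial>M)"
    proof (intro always_eventually allI integral_mono)
      fix k
      show "integrable M (\<lambda>x. (D k i x - g i x)^2)" by (rule dsi)
      show "integrable M (\<lambda>x. \<Sum>i\<in>UNIV. (D k i x - g i x)^2)" using dsi by auto
      fix x show "(D k i x - g i x)^2 \<le> (\<Sum>i\<in>UNIV. (D k i x - g i x)^2)"
        by (rule member_le_sum) auto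
    qed
  qed
  have "(\<lambda>k. \<integral>x. (D k i x)^2 \<partial>M) \<longlonglongrightarrow> (\<integral>x. (g i x)^2 \<partial>M)" for i
    by (rule L2conv[OF gm Dm gi Di each])
  then have "(\<lambda>k. \<Sum>i\<in>UNIV. \<integral>x. (D k i x)^2 \<partial>M) \<longlonglongrightarrow> (\<Sum>i\<in>UNIV. \<integral>x. (g i x)^2 \<partial>M)"
    by (intro tendsto_sum) auto
  then show ?thesis using Di gi by (simp add: Bochner_Integration.integral_sum)
qed


lemma pd_outside:
  fixes \<phi> :: "real^'n::finite \<Rightarrow> real"
  assumes sm: "smooth_on \<phi> UNIV" and x: "x \<notin> closure {x. \<phi> x \<noteq> 0}"
  shows "pd j \<phi> x = 0"
proof -
  let ?S = "- closure {x. \<phi> x \<noteq> 0}"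
  have "((\<lambda>_. 0::real) has_derivative (\<lambda>_. 0)) (at x)" by simp
  then have "(\<phi> has_derivative (\<lambda>_. 0)) (at x)"
  proof (rule has_derivative_transform_within_open)
    show "open ?S" by auto
    show "x \<in> ?S" using x by simp
    fix y assume "y \<in> ?S"
    then show "0 = \<phi> y" using closure_subset[of "{x. \<phi> x \<noteq> 0}"] by auto
  qed
  then have "frechet_derivative \<phi> (at x) = (\<lambda>_. 0)" by (rule frechet_derivative_at[symmetric])
  then show ?thesis by (simp add: pd_def)
qed

lemma phi_outside:
  assumes "x \<notin> closure {x. \<phi> x \<noteq> 0}"
  shows "\<phi> x = 0"
  using assms closure_subset[of "{x. \<phi> x \<noteq> 0}"] by auto

lemma emeasure_cball_fin: "emeasure lborel (cball (c::'a::euclidean_space) r) < \<infinity>"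
proof (cases "0 \<le> r")
  case True then show ?thesis by (simp add: emeasure_cball)
next
  case False then show ?thesis by (simp add: cball_empty)
qed

lemma int_bound_cball:
  fixes f :: "'a::euclidean_space \<Rightarrow> real"
  assumes [measurable]: "f \<in> borel_measurable borel" and b: "\<And>x. \<bar>f x\<bar> \<le> M * indicator (cball c r) x"
  shows "integrable lborel f"
proof (rule Bochner_Integration.integrable_bound)
  show "integrable lborel (\<lambda>x. M * indicator (cball c r) x)"
    using emeasure_cball_fin[of c r] by (intro integrable_mult_right integrable_real_indicator) auto
  show "AE x in lborel. norm (f x) \<le> norm (M * indicator (cball c r) x)"
    using b by (auto intro!: AE_I2 order_trans[OF _ abs_ge_self])
qed simp

lemma ibp_lborel:
  fixes \<phi> :: "real^'n::finite \<Rightarrow> real"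
  assumes sm: "smooth_on \<phi> UNIV" and Ksub: "closure {x. \<phi> x \<noteq> 0} \<subseteq> cball c R" and R: "0 \<le> R"
  shows "(\<integral>x. pd i \<phi> x \<partial>lborel) = 0"
proof -
  define K where "K = closure {x. \<phi> x \<noteq> 0}"
  define e :: "real^'n" where "e = axis i 1"
  have ne: "norm e = 1" by (simp add: e_def)
  define gr where "gr x = (\<chi> j. pd j \<phi> x)" for x
  have dv: "(\<phi> has_derivative (\<lambda>h. gr x \<bullet> h)) (at x)" for x unfolding gr_def by (rule smooth_grad[OF sm])
  have cg: "continuous_on UNIV gr" unfolding gr_def by (rule smooth_grad_cont[OF sm])
  have cphi: "continuous_on UNIV \<phi>" by (rule smooth_cont[OF sm])
  have cpd: "continuous_on UNIV (pd i \<phi>)" by (rule smooth_cont[OF smooth_onD(3)[OF sm]])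
  have [measurable]: "\<phi> \<in> borel_measurable borel" "pd i \<phi> \<in> borel_measurable borel"
    using cphi cpd by (auto intro: borel_measurable_continuous_onI)
  have pde: "pd i \<phi> x = gr x \<bullet> e" for x by (simp add: gr_def e_def inner_axis)
  have grz: "gr x = 0" if "x \<notin> K" for x
    using pd_outside[OF sm] that unfolding K_def gr_def by (simp add: vec_eq_iff)
  have phz: "\<phi> x = 0" if "x \<notin> K" for x using phi_outside that unfolding K_def by blast
  obtain Mg0 where Mg0: "\<forall>x\<in>cball c R. norm (gr x) \<le> Mg0" using cont_bounded_cball[OF cg] by blast
  define Mg where "Mg = max Mg0 0"
  have Mg: "norm (gr x) \<le> Mg" for x
  proof (cases "x \<in> cball c R")
    case True then have "norm (gr x) \<le> Mg0" using Mg0 by blast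
    then show ?thesis by (simp add: Mg_def)
  next
    case False then have "x \<notin> K" using Ksub unfolding K_def by blast
    then show ?thesis by (simp add: grz Mg_def)
  qed
  obtain Mp0 where Mp0: "\<forall>x\<in>cball c R. norm (\<phi> x) \<le> Mp0" using cont_bounded_cball[OF cphi] by blast
  define Mp where "Mp = max Mp0 0"
  have Mp: "\<bar>\<phi> x\<bar> \<le> Mp * indicator (cball c R) x" for x
  proof (cases "x \<in> cball c R")
    case True then have "norm (\<phi> x) \<le> Mp0" using Mp0 by blast
    then show ?thesis using True by (simp add: Mp_def)
  next
    case False then have "x \<notin> K" using Ksub unfolding K_def by blast
    then show ?thesis using False by (simp add: phz Mp_def)
  qed
  have iphi: "integrable lborel \<phi>" by (rule int_bound_cball[OF _ Mp]) simp
  have iphis: "integrable lborel (\<lambda>x. \<phi> (x + h *\<^sub>R e))" for h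
  proof (rule int_bound_cball[where c="c - h *\<^sub>R e" and r=R and M=Mp])
    fix x
    have "indicator (cball c R) (x + h *\<^sub>R e) = (indicator (cball (c - h *\<^sub>R e) R) x :: real)"
      by (simp add: indicator_def dist_norm algebra_simps)
    then show "\<bar>\<phi> (x + h *\<^sub>R e)\<bar> \<le> Mp * indicator (cball (c - h *\<^sub>R e) R) x"
      using Mp[of "x + h *\<^sub>R e"] by simp
  qed measurable
  have transl: "(\<integral>x. \<phi> (x + h *\<^sub>R e) \<partial>lborel) = (\<integral>x. \<phi> x \<partial>lborel)" for h
  proof -
    have "(\<integral>x. \<phi> x \<partial>lborel) = (\<integral>x. \<phi> x \<partial>distr lborel borel ((+) (h *\<^sub>R e)))"
      by (simp add: lborel_distr_plus)
    also have "\<dots> = (\<integral>x. \<phi> (h *\<^sub>R e + x) \<partial>lborel)"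
      by (rule integral_distr) auto
    finally show ?thesis by (simp add: add.commute)
  qed
  define hk where "hk k = inverse (real (Suc k))" for k
  have hk0: "0 < hk k" for k by (simp add: hk_def)
  have hk1: "hk k \<le> 1" for k unfolding hk_def by (simp add: inverse_le_1_iff)
  define s where "s k x = (\<phi> (x + hk k *\<^sub>R e) - \<phi> x) / hk k" for k x
  have [measurable]: "s k \<in> borel_measurable borel" for k unfolding s_def by measurable
  have s0: "(\<integral>x. s k x \<partial>lborel) = 0" for k
  proof -
    have "(\<integral>x. s k x \<partial>lborel) = (\<integral>x. \<phi> (x + hk k *\<^sub>R e) - \<phi> x \<partial>lborel) / hk k"
      unfolding s_def by simp
    also have "(\<integral>x. \<phi> (x + hk k *\<^sub>R e) - \<phi> x \<partial>lborel) = 0"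
      using iphi iphis transl by simp
    finally show ?thesis by simp
  qed
  have line: "((\<lambda>t. \<phi> (x + t *\<^sub>R e)) has_real_derivative (gr (x + t *\<^sub>R e) \<bullet> e)) (at t)" for x t
  proof -
    have 1: "((\<lambda>t. x + t *\<^sub>R e) has_derivative (\<lambda>h. h *\<^sub>R e)) (at t)"
      by (auto intro!: derivative_eq_intros)
    have "((\<phi> \<circ> (\<lambda>t. x + t *\<^sub>R e)) has_derivative ((\<lambda>h. gr (x + t *\<^sub>R e) \<bullet> h) \<circ> (\<lambda>h. h *\<^sub>R e))) (at t)"
      by (rule diff_chain_at[OF 1 dv])
    moreover have "(\<lambda>h. gr (x + t *\<^sub>R e) \<bullet> h) \<circ> (\<lambda>h. h *\<^sub>R e) = (*) (gr (x + t *\<^sub>R e) \<bullet> e)"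
      by (auto simp: fun_eq_iff inner_scaleR_right)
    ultimately show ?thesis
      unfolding has_field_derivative_def by (simp add: o_def)
  qed
  have hkf: "filterlim hk (at 0) sequentially"
  proof -
    have "hk \<longlonglongrightarrow> 0" unfolding hk_def by (rule LIMSEQ_inverse_real_of_nat)
    moreover have "\<forall>k. hk k \<noteq> 0" using hk0 by (metis less_irrefl)
    ultimately show ?thesis unfolding filterlim_at by (auto intro: always_eventually)
  qed
  have conv: "(\<lambda>k. s k x) \<longlonglongrightarrow> pd i \<phi> x" for x
  proof -
    have "((\<lambda>h. (\<phi> (x + (0 + h) *\<^sub>R e) - \<phi> (x + 0 *\<^sub>R e)) / h) \<longlongrightarrow> gr (x + 0 *\<^sub>R e) \<bullet> e) (at 0)"
      using line[of x 0] unfolding DERIV_def .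
    then have "((\<lambda>h. (\<phi> (x + h *\<^sub>R e) - \<phi> x) / h) \<longlongrightarrow> pd i \<phi> x) (at 0)"
      by (simp add: pde)
    from filterlim_compose[OF this hkf] show ?thesis unfolding s_def by (simp add: o_def)
  qed
  define w where "w x = Mg * indicator (cball c (R + 1)) x" for x
  have wi: "integrable lborel w"
    unfolding w_def using emeasure_cball_fin[of c "R + 1"] by (intro integrable_mult_right integrable_real_indicator) auto
  have dom: "norm (s k x) \<le> w x" for k x
  proof (cases "x \<in> cball c (R + 1)")
    case True
    obtain z where z: "0 < z" "z < hk k"
      and eq: "\<phi> (x + hk k *\<^sub>R e) - \<phi> (x + 0 *\<^sub>R e) = (hk k - 0) * (gr (x + z *\<^sub>R e) \<bullet> e)"
      using MVT2[of 0 "hk k" "\<lambda>t. \<phi> (x + t *\<^sub>R e)" "\<lambda>t. gr (x + t *\<^sub>R e) \<bullet> e"] hk0[of k] line by blast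
    have "s k x = gr (x + z *\<^sub>R e) \<bullet> e" unfolding s_def using eq hk0[of k] by simp
    also have "\<bar>\<dots>\<bar> \<le> norm (gr (x + z *\<^sub>R e)) * norm e" by (rule Cauchy_Schwarz_ineq2)
    also have "\<dots> \<le> Mg" using Mg ne by simp
    finally show ?thesis using True by (simp add: w_def)
  next
    case False
    then have xK: "x \<notin> K" using Ksub unfolding K_def by auto
    have "dist c (x + hk k *\<^sub>R e) > R"
    proof -
      have "dist c x \<le> dist c (x + hk k *\<^sub>R e) + dist (x + hk k *\<^sub>R e) x" by (rule dist_triangle)
      also have "dist (x + hk k *\<^sub>R e) x = hk k" using ne hk0[of k] by (simp add: dist_norm)
      finally show ?thesis using False hk1[of k] by simp
    qed
    then have "x + hk k *\<^sub>R e \<notin> K" using Ksub unfolding K_def by auto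
    then show ?thesis using xK False by (simp add: s_def phz w_def)
  qed
  have "(\<lambda>k. \<integral>x. s k x \<partial>lborel) \<longlonglongrightarrow> (\<integral>x. pd i \<phi> x \<partial>lborel)"
    by (rule integral_dominated_convergence[OF _ _ wi]) (use conv dom in auto)
  then show ?thesis using s0 by (simp add: LIMSEQ_const_iff)
qed

lemma ibp_zero:
  fixes \<phi> :: "real^'n::finite \<Rightarrow> real"
  assumes "test_fun (ball c R) \<phi>"
  shows "(\<integral>x. pd i \<phi> x \<partial>lebesgue_on (ball c R)) = 0"
proof -
  have sm: "smooth_on \<phi> UNIV" and Ks: "closure {x. \<phi> x \<noteq> 0} \<subseteq> ball c R"
    using assms unfolding test_fun_def by auto
  have cpd: "continuous_on UNIV (pd i \<phi>)" by (rule smooth_cont[OF smooth_onD(3)[OF sm]])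
  have [measurable]: "pd i \<phi> \<in> borel_measurable borel"
    using cpd by (auto intro: borel_measurable_continuous_onI)
  show ?thesis
  proof (cases "0 \<le> R")
    case False
    then show ?thesis by (simp add: ball_empty)
  next
    case True
    have "(\<integral>x. pd i \<phi> x \<partial>lebesgue_on (ball c R)) = (\<integral>x. indicator (ball c R) x *\<^sub>R pd i \<phi> x \<partial>lebesgue)"
      by (rule integral_restrict_space) auto
    also have "\<dots> = (\<integral>x. pd i \<phi> x \<partial>lebesgue)"
    proof (intro Bochner_Integration.integral_cong refl)
      fix x show "indicator (ball c R) x *\<^sub>R pd i \<phi> x = pd i \<phi> x"
      proof (cases "x \<in> ball c R")
        case False
        then have "x \<notin> closure {x. \<phi> x \<noteq> 0}" using Ks by blast
        then show ?thesis using False by (simp add: pd_outside[OF sm])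
      qed simp
    qed
    also have "\<dots> = (\<integral>x. pd i \<phi> x \<partial>lborel)" by (rule integral_completion) simp
    also have "\<dots> = 0" using ibp_lborel[OF sm order_trans[OF Ks ball_subset_cball] True] .
    finally show ?thesis .
  qed
qed


lemma H1_const: "H1_grad (ball c R) (\<lambda>_. 1) (\<lambda>i (_::real^'n::finite). 0)"
proof -
  have ic: "integrable (lebesgue_on (ball c R)) (\<lambda>x::real^'n. (k::real))" for k
    using finite_measure.integrable_const[OF finite_lon_ball] by blast
  show ?thesis unfolding H1_grad_def L2_on_def
    using ibp_zero[of c R] ic by auto
qed

lemma bdry_const: "bdry_abs_int c R (\<lambda>_. 1) (\<lambda>i (_::real^'n::finite). 0) (perimeter_ball c R)"
  unfolding bdry_abs_int_def perimeter_ball_def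
  by (rule exI[of _ "\<lambda>k _. 1"]) (simp add: const_smooth pd_const)

lemma V_pos: "0 < R \<Longrightarrow> 0 < measure lebesgue (ball (c::'a::euclidean_space) R)"
  by simp

lemma perimeter_eq: "perimeter_ball (c::real^'n::finite) R = real CARD('n) / R * measure lebesgue (ball c R)"
  unfolding perimeter_ball_def sphere_int_def by (simp add: integral_const_lon measure_lon_ball)

definition Mbound :: "real^'n::finite \<Rightarrow> real \<Rightarrow> real \<Rightarrow> real" where
  "Mbound c R e = ((real DIM(real^'n) / R * sqrt (measure lebesgue (ball c R) * (4 * R^2 * 2^DIM(real^'n)))
        + real DIM(real^'n) * sqrt (measure lebesgue (ball c R)))^2
        + (real DIM(real^'n) / R * measure lebesgue (ball c R))^2 / measure lebesgue (ball c R) * (4 * R^2 * 2^DIM(real^'n))) / e"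

lemma elem_lower:
  fixes c :: "real^'n::finite" and u :: "real^'n \<Rightarrow> real" and g :: "'n \<Rightarrow> real^'n \<Rightarrow> real"
  assumes R: "0 < R" and e: "0 < e" "e < 1" and m: "Mbound c R e \<le> m"
    and H: "H1_grad (ball c R) u g" and Bd: "bdry_abs_int c R u g L"
  shows "(perimeter_ball c R)^2 / measure lebesgue (ball c R) * ((1 - e) / (1 + e)) * (\<integral>x. (u x)^2 \<partial>lebesgue_on (ball c R))
     \<le> m * (\<integral>x. (\<Sum>i\<in>UNIV. (g i x)^2) \<partial>lebesgue_on (ball c R)) + L^2"
proof -
  let ?B = "ball c R"
  let ?M = "lebesgue_on ?B"
  define \<kappa> where "\<kappa> = (perimeter_ball c R)^2 / measure lebesgue ?B * ((1 - e) / (1 + e))"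
  obtain v :: "nat \<Rightarrow> real^'n \<Rightarrow> real" where
    vs: "\<And>k. smooth_on (v k) UNIV" and
    vl: "(\<lambda>k. \<integral>x. (v k x - u x)^2 \<partial>?M) \<longlonglongrightarrow> 0" and
    gl: "(\<lambda>k. \<integral>x. (\<Sum>i\<in>UNIV. (pd i (v k) x - g i x)^2) \<partial>?M) \<longlonglongrightarrow> 0" and
    sl: "(\<lambda>k. sphere_int c R (\<lambda>x. \<bar>v k x\<bar>)) \<longlonglongrightarrow> L"
    using Bd unfolding bdry_abs_int_def by blast
  have um: "u \<in> borel_measurable ?M" and ui: "integrable ?M (\<lambda>x. (u x)^2)"
    and gm: "\<And>i. g i \<in> borel_measurable ?M" and gi: "\<And>i. integrable ?M (\<lambda>x. (g i x)^2)"
    using H unfolding H1_grad_def L2_on_def by auto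
  have cv: "continuous_on UNIV (v k)" for k by (rule smooth_cont[OF vs])
  have cpd: "continuous_on UNIV (pd i (v k))" for k i by (rule smooth_cont[OF smooth_onD(3)[OF vs]])
  have vm: "v k \<in> borel_measurable ?M" for k by (intro borel_lon borel_measurable_continuous_onI cv)
  have vi: "integrable ?M (\<lambda>x. (v k x)^2)" for k by (intro int_cont_lon continuous_intros cv)
  have pm: "pd i (v k) \<in> borel_measurable ?M" for k i by (intro borel_lon borel_measurable_continuous_onI cpd)
  have pi: "integrable ?M (\<lambda>x. (pd i (v k) x)^2)" for k i by (intro int_cont_lon continuous_intros cpd)
  have key: "\<kappa> * (\<integral>x. (v k x)^2 \<partial>?M) \<le> m * (\<integral>x. (\<Sum>i\<in>UNIV. (pd i (v k) x)^2) \<partial>?M) + (sphere_int c R (\<lambda>x. \<bar>v k x\<bar>))^2" for k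
  proof -
    have "(real DIM(real^'n) / R * measure lebesgue ?B)^2 / measure lebesgue ?B * ((1 - e) / (1 + e))
       * (\<integral>x. (v k x)^2 \<partial>?M)
     \<le> m * (\<integral>x. (norm (\<chi> i. pd i (v k) x))^2 \<partial>?M)
       + (real DIM(real^'n) / R * (\<integral>x. \<bar>v k (c + (R / norm (x - c)) *\<^sub>R (x - c))\<bar> \<partial>?M))^2"
      by (rule smooth_key[OF smooth_grad[OF vs] smooth_grad_cont[OF vs] R e])
         (use m in \<open>simp add: Mbound_def\<close>)
    then show ?thesis
      unfolding \<kappa>_def perimeter_eq sphere_int_def norm_vec_sq by simp
  qed
  have N: "(\<lambda>k. \<integral>x. (v k x)^2 \<partial>?M) \<longlonglongrightarrow> (\<integral>x. (u x)^2 \<partial>?M)"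
    by (rule L2conv[OF um vm ui vi vl])
  have G: "(\<lambda>k. \<integral>x. (\<Sum>i\<in>UNIV. (pd i (v k) x)^2) \<partial>?M) \<longlonglongrightarrow> (\<integral>x. (\<Sum>i\<in>UNIV. (g i x)^2) \<partial>?M)"
    by (rule grad_conv[OF gm pm gi pi gl])
  have "\<kappa> * (\<integral>x. (u x)^2 \<partial>?M) \<le> m * (\<integral>x. (\<Sum>i\<in>UNIV. (g i x)^2) \<partial>?M) + L^2"
    by (rule LIMSEQ_le[OF tendsto_mult[OF tendsto_const N] tendsto_add[OF tendsto_mult[OF tendsto_const G] tendsto_power[OF sl]]])
       (use key in blast)
  then show ?thesis unfolding \<kappa>_def .
qed

theorem corollary5p7:
  fixes c :: "real^'n::finite" and R :: real
  assumes "CARD('n) \<ge> 2" and "R > 0"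
  shows "((\<lambda>m. m * lambda_ball c R m) \<longlongrightarrow>
           (perimeter_ball c R)^2 / measure lebesgue (ball c R)) at_top"
proof -
  have R: "0 < R" by fact
  let ?B = "ball c R"
  let ?M = "lebesgue_on ?B"
  define V where "V = measure lebesgue ?B"
  define P where "P = perimeter_ball c R"
  define K where "K = P^2 / V"
  have V: "0 < V" unfolding V_def using R by simp
  have K: "0 \<le> K" unfolding K_def using V by simp
  define Q where "Q m = {((\<integral>x. (\<Sum>i\<in>UNIV. (g i x)^2) \<partial>?M) + L^2 / m) / (\<integral>x. (u x)^2 \<partial>?M) | u g L.
      H1_grad ?B u g \<and> bdry_abs_int c R u g L \<and> (\<integral>x. (u x)^2 \<partial>?M) \<noteq> 0}" for m
  have lam: "lambda_ball c R m = Inf (Q m)" for m unfolding lambda_ball_def Q_def by simp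
  have elem0: "(P^2 / m) / V \<in> Q m" for m
  proof -
    have "(\<integral>x. ((\<lambda>_. 1::real) x)^2 \<partial>?M) = V" unfolding V_def by (simp add: integral_const_lon measure_lon_ball)
    moreover have "(\<integral>x. (\<Sum>i\<in>UNIV. ((\<lambda>(i::'n) (_::real^'n). 0::real) i x)^2) \<partial>?M) = 0" by simp
    ultimately show ?thesis unfolding Q_def P_def
      using H1_const[of c R] bdry_const[of c R] V by force
  qed
  have nonneg: "0 \<le> q" if "q \<in> Q m" "0 < m" for q m
    using that unfolding Q_def
    by (auto intro!: divide_nonneg_nonneg add_nonneg_nonneg integral_nonneg_AE sum_nonneg)
  have bdd: "bdd_below (Q m)" if "0 < m" for m
    unfolding bdd_below_def using nonneg[OF _ that] by blast
  have upper: "m * lambda_ball c R m \<le> K" if m: "0 < m" for m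
  proof -
    have "lambda_ball c R m \<le> (P^2 / m) / V" unfolding lam by (rule cInf_lower[OF elem0 bdd[OF m]])
    then have "m * lambda_ball c R m \<le> m * ((P^2 / m) / V)" using m by (intro mult_left_mono) auto
    also have "\<dots> = K" using m by (simp add: K_def)
    finally show ?thesis .
  qed
  have lower: "K * ((1 - e) / (1 + e)) \<le> m * lambda_ball c R m"
    if e: "0 < e" "e < 1" and m: "max (Mbound c R e) 1 \<le> m" for e m
  proof -
    have m0: "0 < m" using m by simp
    have mM: "Mbound c R e \<le> m" using m by simp
    have "K * ((1 - e) / (1 + e)) / m \<le> Inf (Q m)"
    proof (rule cInf_greatest)
      show "Q m \<noteq> {}" using elem0 by blast
      fix q assume "q \<in> Q m"
      then obtain u g L where q: "q = ((\<integral>x. (\<Sum>i\<in>UNIV. (g i x)^2) \<partial>?M) + L^2 / m) / (\<integral>x. (u x)^2 \<partial>?M)"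
        and H: "H1_grad ?B u g" and Bd: "bdry_abs_int c R u g L" and nz: "(\<integral>x. (u x)^2 \<partial>?M) \<noteq> 0"
        unfolding Q_def by blast
      define N where "N = (\<integral>x. (u x)^2 \<partial>?M)"
      define G where "G = (\<integral>x. (\<Sum>i\<in>UNIV. (g i x)^2) \<partial>?M)"
      have N: "0 < N" using nz unfolding N_def
        by (metis (no_types, lifting) integral_nonneg_AE order_le_less zero_le_power2 AE_I2)
      have el: "K * ((1 - e) / (1 + e)) * N \<le> m * G + L^2"
        using elem_lower[OF R e mM H Bd] unfolding K_def P_def V_def N_def G_def .
      have "K * ((1 - e) / (1 + e)) / m = (K * ((1 - e) / (1 + e)) * N) / (m * N)"
        using N m0 by simp
      also have "\<dots> \<le> (m * G + L^2) / (m * N)"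
        using el N m0 by (intro divide_right_mono) auto
      also have "\<dots> = (G + L^2 / m) / N" using m0 N by (simp add: field_simps)
      finally show "K * ((1 - e) / (1 + e)) / m \<le> q" unfolding q N_def G_def .
    qed
    then have "K * ((1 - e) / (1 + e)) / m * m \<le> lambda_ball c R m * m"
      unfolding lam using m0 by (intro mult_right_mono) auto
    then show ?thesis using m0 by (simp add: mult.commute)
  qed
  show ?thesis
    unfolding P_def[symmetric] V_def[symmetric] K_def[symmetric]
  proof (rule tendstoI)
    fix \<epsilon> :: real assume \<epsilon>: "0 < \<epsilon>"
    define e where "e = min (1/2) (\<epsilon> / (2 * K + 1))"
    have e: "0 < e" "e < 1" using \<epsilon> K by (auto simp: e_def)
    have e2: "e * (2 * K + 1) \<le> \<epsilon>"
    proof -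
      have "e \<le> \<epsilon> / (2 * K + 1)" by (simp add: e_def)
      moreover have "0 < 2 * K + 1" using K by simp
      ultimately show ?thesis by (simp add: le_divide_eq)
    qed
    have gap: "K - K * ((1 - e) / (1 + e)) < \<epsilon>"
    proof -
      have "K - K * ((1 - e) / (1 + e)) = 2 * e * K / (1 + e)" using e by (simp add: field_simps)
      also have "\<dots> \<le> 2 * e * K"
      proof -
        have "0 \<le> 2 * e * K" using e K by simp
        then show ?thesis using e by (simp add: divide_le_eq mult_le_cancel_left1)
      qed
      also have "\<dots> < \<epsilon>" using e2 e by (simp add: algebra_simps)
      finally show ?thesis .
    qed
    show "\<forall>\<^sub>F m in at_top. dist (m * lambda_ball c R m) K < \<epsilon>"
      unfolding eventually_at_top_linorder
    proof (intro exI allI impI)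
      fix m assume m: "max (Mbound c R e) 1 \<le> m"
      have m0: "0 < m" using m by simp
      have "K * ((1 - e) / (1 + e)) \<le> m * lambda_ball c R m" by (rule lower[OF e m])
      moreover have "m * lambda_ball c R m \<le> K" by (rule upper[OF m0])
      ultimately show "dist (m * lambda_ball c R m) K < \<epsilon>"
        using gap by (simp add: dist_real_def abs_if)
    qed
  qed
qed


end
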